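(* Under the hypotheses and notation below, the function $h:=(u-1)^2+v^2$ satisfies $$\tfrac12\Delta h=|\nabla u|^2+|\nabla v|^2\ \ge\ h^2+4u\,h,$$ and in particular, where $u>0$, $\Delta h\ge 2h^2$.
   Context: $f:M^{3}\to\mathbb{S}^{4}$ is a minimal isometric immersion of a 3-dimensional Riemannian manifold with Gauss–Kronecker curvature (product of principal curvatures) identically zero and nowhere vanishing second fundamental form; its principal curvatures are $\lambda>0>-\lambda$. $(e_1,e_2,e_3)$ is an orthonormal frame of principal directions for $\lambda,0,-\lambda$, $\nabla$ the Levi-Civita connection, $u:=\langle\nabla_{e_3}e_1,e_2\rangle$, $v:=e_2(\log\lambda)$, and $\Delta$ is the Laplace–Beltrami operator of $M^3$. *)

theory Defs
  imports "HOL-Analysis.Analysis"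
begin

text \<open>M^3 is represented by an open set U of real^3 (a coordinate
  chart), the immersion by f : U -> real^5 with |f| = 1 (so f maps into the unit sphere S^4),
  and M carries the induced metric (so f is isometric by construction).\<close>

definition pd :: "('a::real_normed_vector \<Rightarrow> 'b::real_normed_vector) \<Rightarrow> 'a \<Rightarrow> 'a \<Rightarrow> 'b" where
  "pd \<phi> p w = frechet_derivative \<phi> (at p) w"

fun Ck :: "nat \<Rightarrow> 'a::real_normed_vector set \<Rightarrow> ('a \<Rightarrow> 'b::real_normed_vector) \<Rightarrow> bool" where
  "Ck 0 U \<phi> = continuous_on U \<phi>"
| "Ck (Suc k) U \<phi> = (\<phi> differentiable_on U \<and> (\<forall>w. Ck k U (\<lambda>p. pd \<phi> p w)))"

definition smooth_on :: "'a::real_normed_vector set \<Rightarrow> ('a \<Rightarrow> 'b::real_normed_vector) \<Rightarrow> bool" where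
  "smooth_on U \<phi> \<longleftrightarrow> (\<forall>k. Ck k U \<phi>)"

definition gm :: "(real^3 \<Rightarrow> real^5) \<Rightarrow> real^3 \<Rightarrow> real^3 \<Rightarrow> real^3 \<Rightarrow> real" where
  "gm f p X Y = inner (pd f p X) (pd f p Y)"

definition Gmat :: "(real^3 \<Rightarrow> real^5) \<Rightarrow> real^3 \<Rightarrow> real^3^3" where
  "Gmat f p = (\<chi> i j. gm f p (axis i 1) (axis j 1))"

definition Gam1 :: "(real^3 \<Rightarrow> real^5) \<Rightarrow> real^3 \<Rightarrow> real^3 \<Rightarrow> real^3 \<Rightarrow> real^3 \<Rightarrow> real" where
  "Gam1 f p X Y Z = (pd (\<lambda>q. gm f q Y Z) p X + pd (\<lambda>q. gm f q X Z) p Y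
                     - pd (\<lambda>q. gm f q X Y) p Z) / 2"

text \<open>g(nabla_X Y, Z) at p, for vector fields X Y Z, with nabla the Levi-Civita connection
  of the induced metric: nabla_X Y = (X^i d_i Y^k + Gamma^k_ij X^i Y^j) d_k.\<close>
definition LC_inner :: "(real^3 \<Rightarrow> real^5) \<Rightarrow> (real^3 \<Rightarrow> real^3) \<Rightarrow> (real^3 \<Rightarrow> real^3)
      \<Rightarrow> (real^3 \<Rightarrow> real^3) \<Rightarrow> real^3 \<Rightarrow> real" where
  "LC_inner f X Y Z p = gm f p (pd Y p (X p)) (Z p) + Gam1 f p (X p) (Y p) (Z p)"

definition grad_sq :: "(real^3 \<Rightarrow> real^5) \<Rightarrow> (real^3 \<Rightarrow> real) \<Rightarrow> real^3 \<Rightarrow> real" where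
  "grad_sq f \<phi> p = (\<Sum>i\<in>UNIV. \<Sum>j\<in>UNIV. matrix_inv (Gmat f p) $ i $ j
                        * pd \<phi> p (axis i 1) * pd \<phi> p (axis j 1))"

definition laplacian :: "(real^3 \<Rightarrow> real^5) \<Rightarrow> (real^3 \<Rightarrow> real) \<Rightarrow> real^3 \<Rightarrow> real" where
  "laplacian f \<phi> p = (1 / sqrt (det (Gmat f p))) *
     (\<Sum>i\<in>UNIV. pd (\<lambda>q. sqrt (det (Gmat f q)) *
         (\<Sum>j\<in>UNIV. matrix_inv (Gmat f q) $ i $ j * pd \<phi> q (axis j 1))) p (axis i 1))"

end

theory Submission
  imports Defs
begin


lemma pd_cong_open:
  assumes "open U" "p \<in> U" "\<forall>x\<in>U. \<phi> x = \<psi> x"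
  shows "pd \<phi> p = pd \<psi> p"
proof -
  have "(\<phi> has_derivative D) (at p) \<longleftrightarrow> (\<psi> has_derivative D) (at p)" for D
  proof
    assume "(\<phi> has_derivative D) (at p)" then show "(\<psi> has_derivative D) (at p)"
      by (rule has_derivative_transform_within_open[OF _ assms(1,2)]) (use assms(3) in auto)
  next
    assume "(\<psi> has_derivative D) (at p)" then show "(\<phi> has_derivative D) (at p)"
      by (rule has_derivative_transform_within_open[OF _ assms(1,2)]) (use assms(3) in auto)
  qed
  then show ?thesis unfolding pd_def frechet_derivative_def by simp
qed

lemma pd_eq: "(\<phi> has_derivative D) (at p) \<Longrightarrow> pd \<phi> p = D"
  unfolding pd_def by (rule frechet_derivative_at[symmetric])

lemma diff_on_open_at: "open U \<Longrightarrow> \<phi> differentiable_on U \<Longrightarrow> p \<in> U \<Longrightarrow> (\<phi> has_derivative pd \<phi> p) (at p)"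
  unfolding pd_def
  using differentiable_on_eq_differentiable_at frechet_derivative_works by blast

lemma differentiable_on_cong_open:
  assumes "open U" "\<forall>x\<in>U. \<phi> x = \<psi> x" "\<phi> differentiable_on U"
  shows "\<psi> differentiable_on U"
proof -
  have "\<psi> differentiable at x" if "x \<in> U" for x
  proof -
    have "(\<psi> has_derivative pd \<phi> x) (at x)"
      by (rule has_derivative_transform_within_open[OF diff_on_open_at[OF assms(1,3) that] assms(1) that])
         (use assms(2) in auto)
    then show ?thesis by (rule differentiableI)
  qed
  then show ?thesis using assms(1) differentiable_on_eq_differentiable_at by blast
qed

lemma Ck_mono: "Ck (Suc k) U \<phi> \<Longrightarrow> Ck k U \<phi>"
proof (induction k arbitrary: \<phi>)
  case 0 then show ?case by (simp add: differentiable_imp_continuous_on)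
next
  case (Suc k) then show ?case by simp
qed

lemma Ck_cong: "open U \<Longrightarrow> \<forall>x\<in>U. \<phi> x = \<psi> x \<Longrightarrow> Ck k U \<phi> \<Longrightarrow> Ck k U \<psi>"
proof (induction k arbitrary: \<phi> \<psi>)
  case 0 then show ?case using continuous_on_cong by auto
next
  case (Suc k)
  have e: "\<forall>x\<in>U. pd \<phi> x w = pd \<psi> x w" for w using pd_cong_open[OF Suc.prems(1) _ Suc.prems(2)] by simp
  have d: "\<psi> differentiable_on U" using differentiable_on_cong_open[OF Suc.prems(1,2)] Suc.prems(3) by simp
  have "Ck k U (\<lambda>p. pd \<psi> p w)" for w
    using Suc.IH[OF Suc.prems(1) e] Suc.prems(3) by simp
  then show ?case using d by simp
qed

lemma smooth_on_iff: "smooth_on U \<phi> \<longleftrightarrow> \<phi> differentiable_on U \<and> (\<forall>w. smooth_on U (\<lambda>p. pd \<phi> p w))"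
  unfolding smooth_on_def
proof
  assume A: "\<forall>k. Ck k U \<phi>"
  then have "Ck (Suc k) U \<phi>" for k by blast
  then show "\<phi> differentiable_on U \<and> (\<forall>w k. Ck k U (\<lambda>p. pd \<phi> p w))" by auto
next
  assume B: "\<phi> differentiable_on U \<and> (\<forall>w k. Ck k U (\<lambda>p. pd \<phi> p w))"
  show "\<forall>k. Ck k U \<phi>"
  proof
    fix k show "Ck k U \<phi>" by (cases k) (use B differentiable_imp_continuous_on in auto)
  qed
qed

lemma smooth_cong: "open U \<Longrightarrow> \<forall>x\<in>U. \<phi> x = \<psi> x \<Longrightarrow> smooth_on U \<phi> \<Longrightarrow> smooth_on U \<psi>"
  unfolding smooth_on_def using Ck_cong by blast

lemma Ck_const: fixes U :: "'a::real_normed_vector set" shows "Ck k U (\<lambda>x. c)"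
proof (induction k arbitrary: c)
  case 0 then show ?case by simp
next
  case (Suc k)
  have "pd (\<lambda>x::'a. c) p = (\<lambda>x. 0)" for p by (rule pd_eq) (rule has_derivative_const)
  then have "pd (\<lambda>x::'a. c) p w = 0" for p w by simp
  then show ?case using Suc by simp
qed

lemma Ck_add: "open U \<Longrightarrow> Ck k U \<phi> \<Longrightarrow> Ck k U \<psi> \<Longrightarrow> Ck k U (\<lambda>x. \<phi> x + \<psi> x)"
proof (induction k arbitrary: \<phi> \<psi>)
  case 0 then show ?case by (simp add: continuous_on_add)
next
  case (Suc k)
  have d: "\<phi> differentiable_on U" "\<psi> differentiable_on U" using Suc by auto
  have e: "\<forall>x\<in>U. pd \<phi> x w + pd \<psi> x w = pd (\<lambda>x. \<phi> x + \<psi> x) x w" for w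
    using pd_eq[OF has_derivative_add[OF diff_on_open_at[OF Suc.prems(1) d(1)] diff_on_open_at[OF Suc.prems(1) d(2)]]]
    by simp
  have "Ck k U (\<lambda>x. pd \<phi> x w + pd \<psi> x w)" for w using Suc by simp
  then have "Ck k U (\<lambda>x. pd (\<lambda>x. \<phi> x + \<psi> x) x w)" for w using Ck_cong[OF Suc.prems(1) e] by blast
  then show ?case using d by (simp add: differentiable_on_add)
qed

lemma Ck_linear: "open U \<Longrightarrow> bounded_linear L \<Longrightarrow> Ck k U \<phi> \<Longrightarrow> Ck k U (\<lambda>x. L (\<phi> x))"
proof (induction k arbitrary: \<phi>)
  case 0 then show ?case using bounded_linear.continuous_on[of L] by simp
next
  case (Suc k)
  have d: "\<phi> differentiable_on U" using Suc by auto
  have hd: "((\<lambda>x. L (\<phi> x)) has_derivative (\<lambda>w. L (pd \<phi> x w))) (at x)" if "x \<in> U" for x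
    using bounded_linear.has_derivative[OF Suc.prems(2) diff_on_open_at[OF Suc.prems(1) d that]] .
  have e: "\<forall>x\<in>U. L (pd \<phi> x w) = pd (\<lambda>x. L (\<phi> x)) x w" for w
    using pd_eq[OF hd] by simp
  have "(\<lambda>x. L (\<phi> x)) differentiable_on U"
    using hd Suc.prems(1) differentiable_on_eq_differentiable_at differentiableI by blast
  moreover have "Ck k U (\<lambda>x. pd (\<lambda>x. L (\<phi> x)) x w)" for w
    using Ck_cong[OF Suc.prems(1) e] Suc by simp
  ultimately show ?case by simp
qed

lemma Ck_bilinear:
  assumes "bounded_bilinear bop" "open U"
  shows "Ck k U \<phi> \<Longrightarrow> Ck k U \<psi> \<Longrightarrow> Ck k U (\<lambda>x. bop (\<phi> x) (\<psi> x))"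
proof (induction k arbitrary: \<phi> \<psi>)
  case 0 then show ?case using bounded_bilinear.continuous_on[OF assms(1)] by simp
next
  case (Suc k)
  have d: "\<phi> differentiable_on U" "\<psi> differentiable_on U" using Suc by auto
  have hd: "((\<lambda>x. bop (\<phi> x) (\<psi> x)) has_derivative (\<lambda>w. bop (\<phi> x) (pd \<psi> x w) + bop (pd \<phi> x w) (\<psi> x))) (at x)"
    if "x \<in> U" for x
    using bounded_bilinear.FDERIV[OF assms(1) diff_on_open_at[OF assms(2) d(1) that] diff_on_open_at[OF assms(2) d(2) that]] .
  have e: "\<forall>x\<in>U. bop (\<phi> x) (pd \<psi> x w) + bop (pd \<phi> x w) (\<psi> x) = pd (\<lambda>x. bop (\<phi> x) (\<psi> x)) x w" for w
    using pd_eq[OF hd] by simp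
  have "(\<lambda>x. bop (\<phi> x) (\<psi> x)) differentiable_on U"
    using hd assms(2) differentiable_on_eq_differentiable_at differentiableI by blast
  moreover have "Ck k U (\<lambda>x. bop (\<phi> x) (pd \<psi> x w) + bop (pd \<phi> x w) (\<psi> x))" for w
  proof -
    have k: "Ck k U \<phi>" "Ck k U \<psi>" using Suc.prems Ck_mono by blast+
    have a: "Ck k U (\<lambda>x. bop (\<phi> x) (pd \<psi> x w))" using Suc.IH[OF k(1)] Suc.prems(2) by simp
    have b: "Ck k U (\<lambda>x. bop (pd \<phi> x w) (\<psi> x))" using Suc.IH[OF _ k(2)] Suc.prems(1) by simp
    show ?thesis using Ck_add[OF assms(2) a b] .
  qed
  then have "Ck k U (\<lambda>x. pd (\<lambda>x. bop (\<phi> x) (\<psi> x)) x w)" for w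
    using Ck_cong[OF assms(2) e] by blast
  ultimately show ?case by simp
qed

lemma Ck_inverse:
  fixes \<phi> :: "'a::real_normed_vector \<Rightarrow> real"
  assumes "open U"
  shows "Ck k U \<phi> \<Longrightarrow> \<forall>x\<in>U. \<phi> x \<noteq> 0 \<Longrightarrow> Ck k U (\<lambda>x. inverse (\<phi> x))"
proof (induction k arbitrary: \<phi>)
  case 0 then show ?case by (simp add: continuous_on_inverse)
next
  case (Suc k)
  have d: "\<phi> differentiable_on U" using Suc by auto
  have hd: "((\<lambda>x. inverse (\<phi> x)) has_derivative (\<lambda>h. - (inverse (\<phi> x) * pd \<phi> x h * inverse (\<phi> x)))) (at x)"
    if x: "x \<in> U" for x
    by (rule Deriv.has_derivative_inverse[OF _ diff_on_open_at[OF assms d x]]) (use Suc.prems x in auto)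
  have e: "\<forall>x\<in>U. - (pd \<phi> x w * (inverse (\<phi> x) * inverse (\<phi> x))) = pd (\<lambda>x. inverse (\<phi> x)) x w" for w
    using pd_eq[OF hd] by (simp add: algebra_simps)
  have "(\<lambda>x. inverse (\<phi> x)) differentiable_on U"
    using hd assms differentiable_on_eq_differentiable_at differentiableI by blast
  moreover have "Ck k U (\<lambda>x. - (pd \<phi> x w * (inverse (\<phi> x) * inverse (\<phi> x))))" for w
  proof -
    have i: "Ck k U (\<lambda>x. inverse (\<phi> x))" using Suc Ck_mono by blast
    have "Ck k U (\<lambda>x. pd \<phi> x w * (inverse (\<phi> x) * inverse (\<phi> x)))"
    proof -
      have "Ck k U (\<lambda>x. inverse (\<phi> x) * inverse (\<phi> x))" using Ck_bilinear[OF bounded_bilinear_mult assms i i] .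
      moreover have "Ck k U (\<lambda>x. pd \<phi> x w)" using Suc.prems by simp
      ultimately show ?thesis using Ck_bilinear[OF bounded_bilinear_mult assms] by blast
    qed
    then show ?thesis using Ck_linear[OF assms, of uminus] bounded_linear_minus[OF bounded_linear_ident] by auto
  qed
  then have "Ck k U (\<lambda>x. pd (\<lambda>x. inverse (\<phi> x)) x w)" for w
    using Ck_cong[OF assms e] by blast
  ultimately show ?case by simp
qed

lemma Ck_sum: assumes "open U" shows "finite S \<Longrightarrow> (\<forall>i\<in>S. Ck k U (\<phi> i)) \<Longrightarrow> Ck k U (\<lambda>x. \<Sum>i\<in>S. \<phi> i x)"
  by (induction S rule: finite_induct) (auto simp: Ck_const Ck_add[OF assms])

lemma smooth_const: "smooth_on U (\<lambda>x. c)" by (simp add: smooth_on_def Ck_const)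
lemma smooth_add: "open U \<Longrightarrow> smooth_on U \<phi> \<Longrightarrow> smooth_on U \<psi> \<Longrightarrow> smooth_on U (\<lambda>x. \<phi> x + \<psi> x)"
  by (simp add: smooth_on_def Ck_add)
lemma smooth_linear: "open U \<Longrightarrow> bounded_linear L \<Longrightarrow> smooth_on U \<phi> \<Longrightarrow> smooth_on U (\<lambda>x. L (\<phi> x))"
  by (simp add: smooth_on_def Ck_linear)
lemma smooth_bilinear: "bounded_bilinear bop \<Longrightarrow> open U \<Longrightarrow> smooth_on U \<phi> \<Longrightarrow> smooth_on U \<psi> \<Longrightarrow> smooth_on U (\<lambda>x. bop (\<phi> x) (\<psi> x))"
  by (simp add: smooth_on_def Ck_bilinear)
lemma smooth_inverse: "open U \<Longrightarrow> smooth_on U (\<phi>::_\<Rightarrow>real) \<Longrightarrow> \<forall>x\<in>U. \<phi> x \<noteq> 0 \<Longrightarrow> smooth_on U (\<lambda>x. inverse (\<phi> x))"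
  by (simp add: smooth_on_def Ck_inverse)
lemma smooth_sum: "open U \<Longrightarrow> finite S \<Longrightarrow> (\<forall>i\<in>S. smooth_on U (\<phi> i)) \<Longrightarrow> smooth_on U (\<lambda>x. \<Sum>i\<in>S. \<phi> i x)"
  by (simp add: smooth_on_def Ck_sum)

lemma smooth_mult: "open U \<Longrightarrow> smooth_on U (\<phi>::_\<Rightarrow>real) \<Longrightarrow> smooth_on U \<psi> \<Longrightarrow> smooth_on U (\<lambda>x. \<phi> x * \<psi> x)"
  by (rule smooth_bilinear[OF bounded_bilinear_mult])
lemma smooth_scaleR: "open U \<Longrightarrow> smooth_on U \<phi> \<Longrightarrow> smooth_on U \<psi> \<Longrightarrow> smooth_on U (\<lambda>x. \<phi> x *\<^sub>R \<psi> x)"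
  by (rule smooth_bilinear[OF bounded_bilinear_scaleR])
lemma smooth_inner: "open U \<Longrightarrow> smooth_on U \<phi> \<Longrightarrow> smooth_on U \<psi> \<Longrightarrow> smooth_on U (\<lambda>x. inner (\<phi> x) (\<psi> x))"
  by (rule smooth_bilinear[OF bounded_bilinear_inner])
lemma smooth_minus: "open U \<Longrightarrow> smooth_on U \<phi> \<Longrightarrow> smooth_on U (\<lambda>x. - \<phi> x)"
  using smooth_linear[of U uminus] bounded_linear_minus[OF bounded_linear_ident] by auto
lemma smooth_diff: "open U \<Longrightarrow> smooth_on U \<phi> \<Longrightarrow> smooth_on U \<psi> \<Longrightarrow> smooth_on U (\<lambda>x. \<phi> x - \<psi> x)"
  using smooth_add[of U \<phi> "\<lambda>x. - \<psi> x"] smooth_minus by auto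
lemma smooth_component: "open U \<Longrightarrow> smooth_on U \<phi> \<Longrightarrow> smooth_on U (\<lambda>x. \<phi> x $ i)"
  using smooth_linear[of U "\<lambda>v. v $ i"] bounded_linear_vec_nth by blast
lemma smooth_pd: "smooth_on U \<phi> \<Longrightarrow> smooth_on U (\<lambda>x. pd \<phi> x w)"
  using smooth_on_iff by blast

lemma smooth_has_derivative: "open U \<Longrightarrow> smooth_on U \<phi> \<Longrightarrow> p \<in> U \<Longrightarrow> (\<phi> has_derivative pd \<phi> p) (at p)"
  using diff_on_open_at smooth_on_iff by blast

lemma smooth_pd_linear: "open U \<Longrightarrow> smooth_on U \<phi> \<Longrightarrow> p \<in> U \<Longrightarrow> bounded_linear (pd \<phi> p)"
  using smooth_has_derivative has_derivative_bounded_linear by blast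




lemma mvt_real:
  fixes g :: "real \<Rightarrow> real"
  assumes "0 < t" "\<And>s. 0 \<le> s \<Longrightarrow> s \<le> t \<Longrightarrow> (g has_real_derivative g' s) (at s)"
  shows "\<exists>\<sigma>. 0 < \<sigma> \<and> \<sigma> < t \<and> g t - g 0 = t * g' \<sigma>"
proof -
  have "continuous_on {0..t} g"
    using assms(2) DERIV_continuous continuous_at_imp_continuous_on by (metis atLeastAtMost_iff)
  moreover have "g differentiable (at x)" if "0 < x" "x < t" for x
    using assms(2)[of x] that real_differentiable_def by auto
  ultimately obtain l z where "0 < z" "z < t" "DERIV g z :> l" "g t - g 0 = (t - 0) * l"
    using MVT[OF assms(1), of g] by blast
  moreover have "l = g' z" using DERIV_unique[OF \<open>DERIV g z :> l\<close> assms(2)[of z]] \<open>0 < z\<close> \<open>z < t\<close> by simp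
  ultimately show ?thesis by auto
qed

lemma line_deriv:
  fixes \<psi> :: "'a::real_normed_vector \<Rightarrow> real"
  assumes "(\<psi> has_derivative D) (at (x0 + s *\<^sub>R c))"
  shows "((\<lambda>s. \<psi> (x0 + s *\<^sub>R c)) has_real_derivative D c) (at s)"
proof -
  have l: "linear D" using assms has_derivative_linear by blast
  have "((\<lambda>s. x0 + s *\<^sub>R c) has_derivative (\<lambda>h. h *\<^sub>R c)) (at s)"
    by (auto intro!: derivative_eq_intros)
  from has_derivative_compose[OF this assms]
  have "((\<lambda>s. \<psi> (x0 + s *\<^sub>R c)) has_derivative (\<lambda>h. D (h *\<^sub>R c))) (at s)" by (simp add: o_def)
  moreover have "(\<lambda>h. D (h *\<^sub>R c)) = (\<lambda>h. D c * h)"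
    using l by (auto simp: linear_cmul)
  ultimately show ?thesis by (simp add: has_field_derivative_def)
qed

lemma schwarz_aux:
  fixes \<phi> :: "'a::real_normed_vector \<Rightarrow> real"
  assumes U: "open U" and sm: "smooth_on U \<phi>" and dpos: "0 < d" and ball: "ball p d \<subseteq> U"
    and t: "0 < t" "t * (norm a + norm b) < d"
  shows "\<exists>\<xi>\<in>ball p d. \<phi> (p + t *\<^sub>R a + t *\<^sub>R b) - \<phi> (p + t *\<^sub>R a) - \<phi> (p + t *\<^sub>R b) + \<phi> p
            = t * t * pd (\<lambda>y. pd \<phi> y a) \<xi> b"
proof -
  have inb: "p + \<sigma> *\<^sub>R a + \<tau> *\<^sub>R b \<in> ball p d" if "0 \<le> \<sigma>" "\<sigma> \<le> t" "0 \<le> \<tau>" "\<tau> \<le> t" for \<sigma> \<tau>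
  proof -
    have "norm (\<sigma> *\<^sub>R a + \<tau> *\<^sub>R b) \<le> \<sigma> * norm a + \<tau> * norm b"
      using norm_triangle_ineq[of "\<sigma> *\<^sub>R a" "\<tau> *\<^sub>R b"] that by simp
    also have "\<dots> \<le> t * norm a + t * norm b"
      using that by (intro add_mono mult_right_mono) auto
    finally have "norm (\<sigma> *\<^sub>R a + \<tau> *\<^sub>R b) < d" using t by (simp add: distrib_left)
    moreover have "dist p (p + \<sigma> *\<^sub>R a + \<tau> *\<^sub>R b) = norm (\<sigma> *\<^sub>R a + \<tau> *\<^sub>R b)"
      by (metis add.assoc add_diff_cancel_left' dist_commute dist_norm)
    ultimately show ?thesis by simp
  qed
  have d0: "(\<phi> has_derivative pd \<phi> x) (at x)" if "x \<in> U" for x using smooth_has_derivative[OF U sm that] .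
  have da: "((\<lambda>y. pd \<phi> y a) has_derivative pd (\<lambda>y. pd \<phi> y a) x) (at x)" if "x \<in> U" for x
    using smooth_has_derivative[OF U smooth_pd[OF sm] that] .
  define g where "g s = \<phi> ((p + t *\<^sub>R b) + s *\<^sub>R a) - \<phi> (p + s *\<^sub>R a)" for s
  have "(g has_real_derivative (pd \<phi> ((p + t *\<^sub>R b) + s *\<^sub>R a) a - pd \<phi> (p + s *\<^sub>R a) a)) (at s)"
    if "0 \<le> s" "s \<le> t" for s
  proof -
    have 1: "(p + t *\<^sub>R b) + s *\<^sub>R a \<in> U" using inb[of s t] that t ball by (auto simp: algebra_simps)
    have 2: "p + s *\<^sub>R a \<in> U" using inb[of s 0] that t ball by auto
    show ?thesis unfolding g_def
      by (intro DERIV_diff line_deriv d0 1 2)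
  qed
  from mvt_real[OF t(1) this] obtain \<sigma> where s: "0 < \<sigma>" "\<sigma> < t"
    "g t - g 0 = t * (pd \<phi> ((p + t *\<^sub>R b) + \<sigma> *\<^sub>R a) a - pd \<phi> (p + \<sigma> *\<^sub>R a) a)" by blast
  define k where "k \<tau> = pd \<phi> ((p + \<sigma> *\<^sub>R a) + \<tau> *\<^sub>R b) a" for \<tau>
  have "(k has_real_derivative pd (\<lambda>y. pd \<phi> y a) ((p + \<sigma> *\<^sub>R a) + \<tau> *\<^sub>R b) b) (at \<tau>)"
    if "0 \<le> \<tau>" "\<tau> \<le> t" for \<tau>
  proof -
    have "(p + \<sigma> *\<^sub>R a) + \<tau> *\<^sub>R b \<in> U" using inb[of \<sigma> \<tau>] that s ball by auto
    then show ?thesis unfolding k_def by (intro line_deriv da)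
  qed
  from mvt_real[OF t(1) this] obtain \<tau> where tau: "0 < \<tau>" "\<tau> < t"
    "k t - k 0 = t * pd (\<lambda>y. pd \<phi> y a) ((p + \<sigma> *\<^sub>R a) + \<tau> *\<^sub>R b) b" by blast
  have "\<phi> (p + t *\<^sub>R a + t *\<^sub>R b) - \<phi> (p + t *\<^sub>R a) - \<phi> (p + t *\<^sub>R b) + \<phi> p = g t - g 0"
    by (simp add: g_def algebra_simps)
  also have "\<dots> = t * (k t - k 0)" using s(3) by (simp add: k_def algebra_simps)
  also have "\<dots> = t * t * pd (\<lambda>y. pd \<phi> y a) ((p + \<sigma> *\<^sub>R a) + \<tau> *\<^sub>R b) b" using tau(3) by simp
  finally show ?thesis using inb[of \<sigma> \<tau>] s tau by (intro bexI[where x="(p + \<sigma> *\<^sub>R a) + \<tau> *\<^sub>R b"]) auto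
qed

lemma schwarz_scalar:
  fixes \<phi> :: "'a::real_normed_vector \<Rightarrow> real"
  assumes U: "open U" and sm: "smooth_on U \<phi>" and p: "p \<in> U"
  shows "pd (\<lambda>y. pd \<phi> y a) p b = pd (\<lambda>y. pd \<phi> y b) p a"
proof (rule ccontr)
  define A where "A = pd (\<lambda>y. pd \<phi> y a) p b"
  define B where "B = pd (\<lambda>y. pd \<phi> y b) p a"
  assume "pd (\<lambda>y. pd \<phi> y a) p b \<noteq> pd (\<lambda>y. pd \<phi> y b) p a"
  then have AB: "A \<noteq> B" by (simp add: A_def B_def)
  define e where "e = \<bar>A - B\<bar> / 2"
  have e: "e > 0" using AB by (simp add: e_def)
  have cont: "continuous_on U (\<lambda>x. pd (\<lambda>y. pd \<phi> y c) x c')" for c c'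
    using smooth_pd[OF smooth_pd[OF sm]] smooth_on_iff differentiable_imp_continuous_on by blast
  obtain r where r: "r > 0" "ball p r \<subseteq> U" using U p open_contains_ball by blast
  obtain d1 where d1: "d1 > 0" "\<forall>x\<in>U. dist x p < d1 \<longrightarrow> dist (pd (\<lambda>y. pd \<phi> y a) x b) A < e"
    using cont[of a b] p e unfolding continuous_on_iff A_def by blast
  obtain d2 where d2: "d2 > 0" "\<forall>x\<in>U. dist x p < d2 \<longrightarrow> dist (pd (\<lambda>y. pd \<phi> y b) x a) B < e"
    using cont[of b a] p e unfolding continuous_on_iff B_def by blast
  define d where "d = min r (min d1 d2)"
  have d: "d > 0" "ball p d \<subseteq> U" using r d1 d2 by (auto simp: d_def)
  define t where "t = d / (2 * (norm a + norm b + 1))"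
  have den: "0 < 2 * (norm a + norm b + 1)" by (smt (verit) norm_ge_zero)
  have tpos: "0 < t" unfolding t_def by (rule divide_pos_pos[OF d(1) den])
  have "t * (norm a + norm b) < d"
  proof -
    have "t * (norm a + norm b) \<le> t * (2 * (norm a + norm b + 1)) / 2" using tpos by (simp add: field_simps)
    also have "\<dots> = d / 2" unfolding t_def using den by (simp add: field_simps)
    finally show ?thesis using d by simp
  qed
  then have tb: "t * (norm b + norm a) < d" by (simp add: add.commute)
  obtain \<xi> where xi: "\<xi> \<in> ball p d" "\<phi> (p + t *\<^sub>R a + t *\<^sub>R b) - \<phi> (p + t *\<^sub>R a) - \<phi> (p + t *\<^sub>R b) + \<phi> p
            = t * t * pd (\<lambda>y. pd \<phi> y a) \<xi> b"
    using schwarz_aux[OF U sm d(1) d(2) tpos \<open>t * (norm a + norm b) < d\<close>] by blast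
  obtain \<eta> where eta: "\<eta> \<in> ball p d" "\<phi> (p + t *\<^sub>R b + t *\<^sub>R a) - \<phi> (p + t *\<^sub>R b) - \<phi> (p + t *\<^sub>R a) + \<phi> p
            = t * t * pd (\<lambda>y. pd \<phi> y b) \<eta> a"
    using schwarz_aux[OF U sm d(1) d(2) tpos tb] by blast
  have "p + t *\<^sub>R b + t *\<^sub>R a = p + t *\<^sub>R a + t *\<^sub>R b" by (simp add: algebra_simps)
  then have "t * t * pd (\<lambda>y. pd \<phi> y a) \<xi> b = t * t * pd (\<lambda>y. pd \<phi> y b) \<eta> a"
  proof -
    assume h: "p + t *\<^sub>R b + t *\<^sub>R a = p + t *\<^sub>R a + t *\<^sub>R b"
    show ?thesis using xi(2) eta(2) unfolding h by linarith
  qed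
  then have eq: "pd (\<lambda>y. pd \<phi> y a) \<xi> b = pd (\<lambda>y. pd \<phi> y b) \<eta> a"
    using tpos by simp
  have "dist (pd (\<lambda>y. pd \<phi> y a) \<xi> b) A < e"
  proof -
    have "\<xi> \<in> U" "dist \<xi> p < d1" using xi(1) d(2) by (auto simp: d_def dist_commute)
    then show ?thesis using d1 by blast
  qed
  moreover have "dist (pd (\<lambda>y. pd \<phi> y b) \<eta> a) B < e"
  proof -
    have "\<eta> \<in> U" "dist \<eta> p < d2" using eta(1) d(2) by (auto simp: d_def dist_commute)
    then show ?thesis using d2 by blast
  qed
  ultimately have "\<bar>A - B\<bar> < 2 * e" using eq by (simp add: dist_real_def)
  then show False by (simp add: e_def)
qed

lemma pd_component:
  assumes "open U" "smooth_on U \<phi>" "p \<in> U"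
  shows "pd (\<lambda>x. \<phi> x $ i) p w = pd \<phi> p w $ i"
  using pd_eq[OF bounded_linear.has_derivative[OF bounded_linear_vec_nth smooth_has_derivative[OF assms]]] by simp

lemma schwarz_vec:
  fixes \<phi> :: "'a::real_normed_vector \<Rightarrow> real^'n"
  assumes U: "open U" and sm: "smooth_on U \<phi>" and p: "p \<in> U"
  shows "pd (\<lambda>y. pd \<phi> y a) p b = pd (\<lambda>y. pd \<phi> y b) p a"
proof -
  have "pd (\<lambda>y. pd \<phi> y a) p b $ i = pd (\<lambda>y. pd \<phi> y b) p a $ i" for i
  proof -
    have smi: "smooth_on U (\<lambda>x. \<phi> x $ i)" using smooth_component[OF U sm] .
    have e: "\<forall>y\<in>U. pd \<phi> y c $ i = pd (\<lambda>x. \<phi> x $ i) y c" for c using pd_component[OF U sm] by simp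
    have "pd (\<lambda>y. pd \<phi> y c) p c' $ i = pd (\<lambda>y. pd (\<lambda>x. \<phi> x $ i) y c) p c'" for c c'
    proof -
      have "pd (\<lambda>y. pd \<phi> y c) p c' $ i = pd (\<lambda>y. pd \<phi> y c $ i) p c'"
        using pd_component[OF U smooth_pd[OF sm] p] by simp
      also have "\<dots> = pd (\<lambda>y. pd (\<lambda>x. \<phi> x $ i) y c) p c'"
        using pd_cong_open[OF U p e] by simp
      finally show ?thesis .
    qed
    then show ?thesis using schwarz_scalar[OF U smi p] by simp
  qed
  then show ?thesis by (simp add: vec_eq_iff)
qed




lemma lin_expand: "linear L \<Longrightarrow> L (x::real^'n) = (\<Sum>m\<in>UNIV. x $ m *\<^sub>R L (axis m 1))"
proof -
  assume l: "linear L"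
  have "x = (\<Sum>m\<in>UNIV. x $ m *\<^sub>R axis m 1)" using basis_expansion[of x] by (simp add: scalar_mult_eq_scaleR)
  then have "L x = L (\<Sum>m\<in>UNIV. x $ m *\<^sub>R axis m 1)" by simp
  also have "\<dots> = (\<Sum>m\<in>UNIV. x $ m *\<^sub>R L (axis m 1))" by (simp add: linear_sum[OF l] linear_scale[OF l])
  finally show ?thesis .
qed

lemma pd_dir_gen:
  fixes \<phi> :: "real^'n \<Rightarrow> 'b::real_normed_vector" and X :: "real^'n \<Rightarrow> real^'n"
  assumes U: "open U" and sm: "smooth_on U \<phi>" and smX: "smooth_on U X" and q: "q \<in> U"
    and sym: "\<And>a b. pd (\<lambda>r. pd \<phi> r a) q b = pd (\<lambda>r. pd \<phi> r b) q a"
  shows "pd (\<lambda>r. pd \<phi> r (X r)) q w = pd \<phi> q (pd X q w) + pd (\<lambda>r. pd \<phi> r w) q (X q)"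
proof -
  have e: "\<forall>r\<in>U. (\<Sum>m\<in>UNIV. X r $ m *\<^sub>R pd \<phi> r (axis m 1)) = pd \<phi> r (X r)"
  proof
    fix r assume "r \<in> U"
    then have "linear (pd \<phi> r)" using smooth_pd_linear[OF U sm] bounded_linear.linear by blast
    from lin_expand[OF this, of "X r"] show "(\<Sum>m\<in>UNIV. X r $ m *\<^sub>R pd \<phi> r (axis m 1)) = pd \<phi> r (X r)" by simp
  qed
  have hX: "((\<lambda>r. X r $ m) has_derivative (\<lambda>w. pd X q w $ m)) (at q)" for m
    using bounded_linear.has_derivative[OF bounded_linear_vec_nth smooth_has_derivative[OF U smX q]] .
  have hP: "((\<lambda>r. pd \<phi> r (axis m 1)) has_derivative pd (\<lambda>r. pd \<phi> r (axis m 1)) q) (at q)" for m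
    using smooth_has_derivative[OF U smooth_pd[OF sm] q] .
  have "((\<lambda>r. \<Sum>m\<in>UNIV. X r $ m *\<^sub>R pd \<phi> r (axis m 1)) has_derivative
        (\<lambda>w. \<Sum>m\<in>UNIV. X q $ m *\<^sub>R pd (\<lambda>r. pd \<phi> r (axis m 1)) q w + pd X q w $ m *\<^sub>R pd \<phi> q (axis m 1))) (at q)"
    by (intro has_derivative_sum has_derivative_scaleR hX hP)
  from pd_eq[OF this] have "pd (\<lambda>r. \<Sum>m\<in>UNIV. X r $ m *\<^sub>R pd \<phi> r (axis m 1)) q w =
     (\<Sum>m\<in>UNIV. X q $ m *\<^sub>R pd (\<lambda>r. pd \<phi> r (axis m 1)) q w) + (\<Sum>m\<in>UNIV. pd X q w $ m *\<^sub>R pd \<phi> q (axis m 1))"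
    by (simp add: sum.distrib)
  also have "(\<Sum>m\<in>UNIV. pd X q w $ m *\<^sub>R pd \<phi> q (axis m 1)) = pd \<phi> q (pd X q w)"
    using lin_expand[symmetric, OF bounded_linear.linear[OF smooth_pd_linear[OF U sm q]]] by simp
  also have "(\<Sum>m\<in>UNIV. X q $ m *\<^sub>R pd (\<lambda>r. pd \<phi> r (axis m 1)) q w) = (\<Sum>m\<in>UNIV. X q $ m *\<^sub>R pd (\<lambda>r. pd \<phi> r w) q (axis m 1))"
    using sym by simp
  also have "\<dots> = pd (\<lambda>r. pd \<phi> r w) q (X q)"
    using lin_expand[symmetric, OF bounded_linear.linear[OF smooth_pd_linear[OF U smooth_pd[OF sm] q]]] by simp
  finally have "pd (\<lambda>r. \<Sum>m\<in>UNIV. X r $ m *\<^sub>R pd \<phi> r (axis m 1)) q w = pd \<phi> q (pd X q w) + pd (\<lambda>r. pd \<phi> r w) q (X q)"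
    by (simp add: add.commute)
  then show ?thesis using pd_cong_open[OF U q e] by simp
qed

lemma pd_dir_vec:
  fixes \<phi> :: "real^'n \<Rightarrow> real^'k" and X :: "real^'n \<Rightarrow> real^'n"
  assumes U: "open U" and sm: "smooth_on U \<phi>" and smX: "smooth_on U X" and q: "q \<in> U"
  shows "pd (\<lambda>r. pd \<phi> r (X r)) q w = pd \<phi> q (pd X q w) + pd (\<lambda>r. pd \<phi> r w) q (X q)"
  by (rule pd_dir_gen[OF U sm smX q schwarz_vec[OF U sm q]])

lemma pd_dir_real:
  fixes \<phi> :: "real^'n \<Rightarrow> real" and X :: "real^'n \<Rightarrow> real^'n"
  assumes U: "open U" and sm: "smooth_on U \<phi>" and smX: "smooth_on U X" and q: "q \<in> U"
  shows "pd (\<lambda>r. pd \<phi> r (X r)) q w = pd \<phi> q (pd X q w) + pd (\<lambda>r. pd \<phi> r w) q (X q)"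
  by (rule pd_dir_gen[OF U sm smX q schwarz_scalar[OF U sm q]])

lemma smooth_dir:
  fixes \<phi> :: "real^'n \<Rightarrow> 'b::real_normed_vector" and X :: "real^'n \<Rightarrow> real^'n"
  assumes U: "open U" and sm: "smooth_on U \<phi>" and smX: "smooth_on U X"
  shows "smooth_on U (\<lambda>r. pd \<phi> r (X r))"
proof -
  have e: "\<forall>r\<in>U. (\<Sum>m\<in>UNIV. X r $ m *\<^sub>R pd \<phi> r (axis m 1)) = pd \<phi> r (X r)"
  proof
    fix r assume "r \<in> U"
    then have "linear (pd \<phi> r)" using smooth_pd_linear[OF U sm] bounded_linear.linear by blast
    from lin_expand[OF this, of "X r"] show "(\<Sum>m\<in>UNIV. X r $ m *\<^sub>R pd \<phi> r (axis m 1)) = pd \<phi> r (X r)" by simp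
  qed
  have "smooth_on U (\<lambda>r. \<Sum>m\<in>UNIV. X r $ m *\<^sub>R pd \<phi> r (axis m 1))"
  proof -
    have "\<forall>m\<in>UNIV. smooth_on U (\<lambda>r. X r $ m *\<^sub>R pd \<phi> r (axis m 1))"
      using smooth_scaleR[OF U smooth_component[OF U smX] smooth_pd[OF sm]] by blast
    from smooth_sum[OF U finite this] show ?thesis .
  qed
  then show ?thesis using smooth_cong[OF U e] by blast
qed

lemma pd_linear_at:
  assumes "open U" "smooth_on U \<phi>" "p \<in> U"
  shows "pd \<phi> p (a + b) = pd \<phi> p a + pd \<phi> p b" "pd \<phi> p (c *\<^sub>R a) = c *\<^sub>R pd \<phi> p a"
    "pd \<phi> p (a - b) = pd \<phi> p a - pd \<phi> p b" "pd \<phi> p (- a) = - pd \<phi> p a" "pd \<phi> p 0 = 0"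
    "pd \<phi> p (sum g S) = (\<Sum>i\<in>S. pd \<phi> p (g i))"
  using smooth_pd_linear[OF assms] 
  by (auto simp: linear_add linear_scale linear_diff linear_neg linear_0 linear_sum bounded_linear.linear)

lemma pd_add:
  assumes "open U" "smooth_on U \<phi>" "smooth_on U \<psi>" "p \<in> U"
  shows "pd (\<lambda>x. \<phi> x + \<psi> x) p w = pd \<phi> p w + pd \<psi> p w"
  using pd_eq[OF has_derivative_add[OF smooth_has_derivative[OF assms(1,2,4)] smooth_has_derivative[OF assms(1,3,4)]]] by simp

lemma pd_diff:
  assumes "open U" "smooth_on U \<phi>" "smooth_on U \<psi>" "p \<in> U"
  shows "pd (\<lambda>x. \<phi> x - \<psi> x) p w = pd \<phi> p w - pd \<psi> p w"
  using pd_eq[OF has_derivative_diff[OF smooth_has_derivative[OF assms(1,2,4)] smooth_has_derivative[OF assms(1,3,4)]]] by simp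

lemma pd_mult:
  fixes \<phi> \<psi> :: "_ \<Rightarrow> real"
  assumes "open U" "smooth_on U \<phi>" "smooth_on U \<psi>" "p \<in> U"
  shows "pd (\<lambda>x. \<phi> x * \<psi> x) p w = pd \<phi> p w * \<psi> p + \<phi> p * pd \<psi> p w"
  using pd_eq[OF has_derivative_mult[OF smooth_has_derivative[OF assms(1,2,4)] smooth_has_derivative[OF assms(1,3,4)]]] by simp

lemma pd_scaleR:
  assumes "open U" "smooth_on U \<phi>" "smooth_on U \<psi>" "p \<in> U"
  shows "pd (\<lambda>x. \<phi> x *\<^sub>R \<psi> x) p w = pd \<phi> p w *\<^sub>R \<psi> p + \<phi> p *\<^sub>R pd \<psi> p w"
  using pd_eq[OF has_derivative_scaleR[OF smooth_has_derivative[OF assms(1,2,4)] smooth_has_derivative[OF assms(1,3,4)]]] by simp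

lemma pd_inner:
  assumes "open U" "smooth_on U \<phi>" "smooth_on U \<psi>" "p \<in> U"
  shows "pd (\<lambda>x. inner (\<phi> x) (\<psi> x)) p w = inner (pd \<phi> p w) (\<psi> p) + inner (\<phi> p) (pd \<psi> p w)"
  using pd_eq[OF has_derivative_inner[OF smooth_has_derivative[OF assms(1,2,4)] smooth_has_derivative[OF assms(1,3,4)]]] by simp

lemma pd_const: "pd (\<lambda>x. c) p w = 0"
proof -
  have "pd (\<lambda>x. c) p = (\<lambda>x. 0)" by (rule pd_eq) (rule has_derivative_const)
  then show ?thesis by simp
qed

lemma pd_const_on:
  assumes "open U" "p \<in> U" "\<forall>x\<in>U. \<phi> x = c"
  shows "pd \<phi> p w = 0"
  using pd_cong_open[OF assms(1,2), of \<phi> "\<lambda>x. c"] assms(3) pd_const by metis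




lemma orthonormal_expand:
  fixes b :: "nat \<Rightarrow> 'a::euclidean_space"
  assumes fin: "finite I" and dim: "DIM('a) = card I"
    and on: "\<And>i j. i \<in> I \<Longrightarrow> j \<in> I \<Longrightarrow> inner (b i) (b j) = (if i = j then 1 else 0)"
  shows "x = (\<Sum>i\<in>I. inner x (b i) *\<^sub>R b i)"
proof -
  have inj: "inj_on b I"
  proof (rule inj_onI)
    fix i j assume "i \<in> I" "j \<in> I" "b i = b j"
    then show "i = j" using on[of i j] on[of i i] by (auto split: if_splits)
  qed
  define S where "S = b ` I"
  have cS: "card S = card I" using card_image[OF inj] by (simp add: S_def)
  have po: "pairwise orthogonal S"
    unfolding pairwise_def S_def orthogonal_def using on by auto
  have n0: "0 \<notin> S" unfolding S_def using on by force
  have ind: "independent S" using pairwise_orthogonal_independent[OF po n0] .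
  have sp: "UNIV \<subseteq> span S"
    by (rule card_ge_dim_independent) (use ind cS dim in auto)
  define r where "r = x - (\<Sum>i\<in>I. inner x (b i) *\<^sub>R b i)"
  have "inner r (b j) = 0" if j: "j \<in> I" for j
  proof -
    have "inner (\<Sum>i\<in>I. inner x (b i) *\<^sub>R b i) (b j) = (\<Sum>i\<in>I. inner x (b i) * inner (b i) (b j))"
      by (simp add: inner_sum_left)
    also have "\<dots> = (\<Sum>i\<in>I. if i = j then inner x (b j) else 0)"
      using on j by (intro sum.cong) auto
    also have "\<dots> = inner x (b j)" using j fin by simp
    finally show ?thesis by (simp add: r_def inner_diff_left)
  qed
  then have "orthogonal r y" if "y \<in> S" for y using that unfolding S_def orthogonal_def by auto
  then have "orthogonal r r" using orthogonal_to_span sp by blast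
  then have "r = 0" using orthogonal_self by blast
  then show ?thesis by (simp add: r_def)
qed

definition dirv :: "(real^3 \<Rightarrow> real^3) \<Rightarrow> (real^3 \<Rightarrow> 'b::real_normed_vector) \<Rightarrow> real^3 \<Rightarrow> 'b" where
  "dirv X \<phi> q = pd \<phi> q (X q)"

definition dl :: "nat \<Rightarrow> nat \<Rightarrow> real" where "dl a b = (if a = b then 1 else 0)"

locale hyp =
  fixes U :: "(real^3) set" and f :: "real^3 \<Rightarrow> real^5" and N :: "real^3 \<Rightarrow> real^5"
    and lam :: "real^3 \<Rightarrow> real" and e1 e2 e3 :: "real^3 \<Rightarrow> real^3"
  assumes U_open: "open U"
    and f_smooth: "smooth_on U f"
    and f_sphere: "\<forall>p\<in>U. norm (f p) = 1"
    and f_immersion: "\<forall>p\<in>U. inj (pd f p)"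
    and N_smooth: "smooth_on U N"
    and N_unit: "\<forall>p\<in>U. norm (N p) = 1"
    and N_normal: "\<forall>p\<in>U. inner (N p) (f p) = 0 \<and> (\<forall>w. inner (N p) (pd f p w) = 0)"
    and lam_smooth: "smooth_on U lam"
    and lam_pos: "\<forall>p\<in>U. lam p > 0"
    and e_smooth: "smooth_on U e1" "smooth_on U e2" "smooth_on U e3"
    and e_orthonormal: "\<forall>p\<in>U.
        gm f p (e1 p) (e1 p) = 1 \<and> gm f p (e2 p) (e2 p) = 1 \<and> gm f p (e3 p) (e3 p) = 1 \<and>
        gm f p (e1 p) (e2 p) = 0 \<and> gm f p (e1 p) (e3 p) = 0 \<and> gm f p (e2 p) (e3 p) = 0"
    and e_principal: "\<forall>p\<in>U.
        pd N p (e1 p) = - (lam p *\<^sub>R pd f p (e1 p)) \<and>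
        pd N p (e2 p) = 0 \<and>
        pd N p (e3 p) = lam p *\<^sub>R pd f p (e3 p)"
begin

definition E :: "nat \<Rightarrow> real^3 \<Rightarrow> real^3" where
  "E i = (if i = 1 then e1 else if i = 2 then e2 else e3)"
definition lk :: "nat \<Rightarrow> real^3 \<Rightarrow> real" where
  "lk i = (\<lambda>q. if i = 1 then lam q else if i = 2 then 0 else - lam q)"
definition F :: "nat \<Rightarrow> real^3 \<Rightarrow> real^5" where
  "F i = dirv (E i) f"
definition G :: "nat \<Rightarrow> nat \<Rightarrow> nat \<Rightarrow> real^3 \<Rightarrow> real" where
  "G l i k = (\<lambda>q. inner (dirv (E i) (F k) q) (F l q))"
definition bs :: "real^3 \<Rightarrow> nat \<Rightarrow> real^5" where
  "bs q k = (if k = 0 then f q else if k = 4 then N q else F k q)"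

abbreviation "Idx \<equiv> {1,2,3::nat}"

lemma U: "open U" by (rule U_open)

lemma smE: "smooth_on U (E i)" using e_smooth by (simp add: E_def)
lemma smF: "smooth_on U (F i)" unfolding F_def dirv_def by (rule smooth_dir[OF U f_smooth smE])
lemma smDir: "smooth_on U \<phi> \<Longrightarrow> smooth_on U (dirv (E i) \<phi>)" unfolding dirv_def by (rule smooth_dir[OF U _ smE])
lemma smG: "smooth_on U (G l i k)" unfolding G_def by (rule smooth_inner[OF U smDir[OF smF] smF])
lemma smlk: "smooth_on U (lk i)"
proof -
  have "lk i = lam \<or> lk i = (\<lambda>q. 0) \<or> lk i = (\<lambda>q. - lam q)" unfolding lk_def
    by (cases "i = 1"; cases "i = 2") (auto simp: fun_eq_iff)
  then show ?thesis using lam_smooth smooth_const smooth_minus[OF U lam_smooth] by metis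
qed

lemma f_perp: assumes q: "q \<in> U" shows "inner (pd f q w) (f q) = 0"
proof -
  have c: "\<forall>x\<in>U. inner (f x) (f x) = 1" using f_sphere by (simp add: dot_square_norm)
  have "pd (\<lambda>x. inner (f x) (f x)) q w = 0" by (rule pd_const_on[OF U q c])
  moreover have "pd (\<lambda>x. inner (f x) (f x)) q w = inner (pd f q w) (f q) + inner (f q) (pd f q w)"
    by (rule pd_inner[OF U f_smooth f_smooth q])
  ultimately show ?thesis by (simp add: inner_commute)
qed

lemma orthF: assumes q: "q \<in> U" and ij: "i \<in> Idx" "j \<in> Idx"
  shows "inner (F i q) (F j q) = dl i j"
  using e_orthonormal q ij by (auto simp: F_def dirv_def E_def gm_def dl_def inner_commute)

lemma F_f: "q \<in> U \<Longrightarrow> inner (F i q) (f q) = 0" unfolding F_def dirv_def by (rule f_perp)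
lemma F_N: "q \<in> U \<Longrightarrow> inner (F i q) (N q) = 0" using N_normal by (simp add: F_def dirv_def inner_commute)

lemma bs_orth: assumes q: "q \<in> U" and ij: "i \<in> {0,1,2,3,4}" "j \<in> {0,1,2,3,4}"
  shows "inner (bs q i) (bs q j) = (if i = j then 1 else 0)"
proof -
  have ff: "inner (f q) (f q) = 1" using f_sphere q by (simp add: dot_square_norm)
  have nn: "inner (N q) (N q) = 1" using N_unit q by (simp add: dot_square_norm)
  have nf: "inner (N q) (f q) = 0" using N_normal q by simp
  show ?thesis using ij ff nn nf F_f[OF q] F_N[OF q] orthF[OF q]
    by (auto simp: bs_def dl_def inner_commute)
qed

lemma expand5: assumes q: "q \<in> U"
  shows "x = inner x (f q) *\<^sub>R f q + inner x (N q) *\<^sub>R N q + (\<Sum>k\<in>Idx. inner x (F k q) *\<^sub>R F k q)"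
proof -
  have "x = (\<Sum>i\<in>{0,1,2,3,4}. inner x (bs q i) *\<^sub>R bs q i)"
    by (rule orthonormal_expand) (use bs_orth[OF q] in auto)
  then show ?thesis by (simp add: bs_def algebra_simps)
qed

lemma parseval: assumes q: "q \<in> U"
  shows "inner x y = inner x (f q) * inner y (f q) + inner x (N q) * inner y (N q) + (\<Sum>k\<in>Idx. inner x (F k q) * inner y (F k q))"
proof -
  define X where "X = inner x (f q) *\<^sub>R f q + inner x (N q) *\<^sub>R N q + (\<Sum>k\<in>Idx. inner x (F k q) *\<^sub>R F k q)"
  have "x = X" unfolding X_def by (rule expand5[OF q])
  moreover have "inner X y = inner x (f q) * inner y (f q) + inner x (N q) * inner y (N q) + (\<Sum>k\<in>Idx. inner x (F k q) * inner y (F k q))"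
    unfolding X_def by (simp add: inner_commute[of _ y] inner_add_right inner_sum_right)
  ultimately show ?thesis by simp
qed

lemma pdf_linear: "q \<in> U \<Longrightarrow> linear (pd f q)"
  using smooth_pd_linear[OF U f_smooth] bounded_linear.linear by blast

lemma expand3: assumes q: "q \<in> U"
  shows "w = (\<Sum>k\<in>Idx. inner (pd f q w) (F k q) *\<^sub>R E k q)"
proof -
  define r where "r = w - (\<Sum>k\<in>Idx. inner (pd f q w) (F k q) *\<^sub>R E k q)"
  have l: "linear (pd f q)" using pdf_linear[OF q] .
  have pr: "pd f q r = pd f q w - (\<Sum>k\<in>Idx. inner (pd f q w) (F k q) *\<^sub>R F k q)"
    unfolding r_def by (simp add: linear_diff[OF l] linear_add[OF l] linear_scale[OF l] F_def dirv_def)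
  have a: "inner (pd f q r) (F j q) = 0" if "j \<in> Idx" for j
    using that orthF[OF q] by (auto simp: pr inner_diff_left inner_add_left dl_def)
  have b: "inner (pd f q r) (f q) = 0" using f_perp[OF q] .
  have c: "inner (pd f q r) (N q) = 0" using N_normal q by (simp add: inner_commute)
  have "inner (pd f q r) (pd f q r) = 0" using parseval[OF q, of "pd f q r" "pd f q r"] a b c by simp
  then have "pd f q r = 0" by simp
  then have "r = 0" using f_immersion q l by (metis linear_0 injD)
  then show ?thesis by (simp add: r_def)
qed

lemma dirN: assumes q: "q \<in> U" and i: "i \<in> Idx"
  shows "dirv (E i) N q = - (lk i q *\<^sub>R F i q)"
  using e_principal q i by (auto simp: dirv_def E_def lk_def F_def)

lemma dirf: "dirv (E i) f = F i" by (simp add: F_def)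

lemma G_antisym: assumes q: "q \<in> U" and kl: "k \<in> Idx" "l \<in> Idx"
  shows "G l i k q = - G k i l q"
proof -
  have c: "\<forall>x\<in>U. inner (F k x) (F l x) = dl k l" using orthF kl by blast
  have "pd (\<lambda>x. inner (F k x) (F l x)) q (E i q) = 0" by (rule pd_const_on[OF U q c])
  moreover have "pd (\<lambda>x. inner (F k x) (F l x)) q (E i q) = inner (dirv (E i) (F k) q) (F l q) + inner (F k q) (dirv (E i) (F l) q)"
    unfolding dirv_def by (rule pd_inner[OF U smF smF q])
  ultimately show ?thesis by (simp add: G_def inner_commute)
qed

lemma G_diag: "q \<in> U \<Longrightarrow> k \<in> Idx \<Longrightarrow> G k i k q = 0"
  using G_antisym[of q k k i] by simp

lemma DF_f: assumes q: "q \<in> U" and ik: "i \<in> Idx" "k \<in> Idx"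
  shows "inner (dirv (E i) (F k) q) (f q) = - dl i k"
proof -
  have c: "\<forall>x\<in>U. inner (F k x) (f x) = 0" using F_f by blast
  have "pd (\<lambda>x. inner (F k x) (f x)) q (E i q) = 0" by (rule pd_const_on[OF U q c])
  moreover have "pd (\<lambda>x. inner (F k x) (f x)) q (E i q) = inner (dirv (E i) (F k) q) (f q) + inner (F k q) (dirv (E i) f q)"
    unfolding dirv_def by (rule pd_inner[OF U smF f_smooth q])
  ultimately show ?thesis using orthF[OF q ik(2) ik(1)] by (simp add: dirf dl_def split: if_splits)
qed

lemma DF_N: assumes q: "q \<in> U" and ik: "i \<in> Idx" "k \<in> Idx"
  shows "inner (dirv (E i) (F k) q) (N q) = lk i q * dl i k"
proof -
  have c: "\<forall>x\<in>U. inner (F k x) (N x) = 0" using F_N by blast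
  have "pd (\<lambda>x. inner (F k x) (N x)) q (E i q) = 0" by (rule pd_const_on[OF U q c])
  moreover have "pd (\<lambda>x. inner (F k x) (N x)) q (E i q) = inner (dirv (E i) (F k) q) (N q) + inner (F k q) (dirv (E i) N q)"
    unfolding dirv_def by (rule pd_inner[OF U smF N_smooth q])
  ultimately show ?thesis using orthF[OF q ik(2) ik(1)] dirN[OF q ik(1)]
    by (simp add: dl_def inner_minus_right split: if_splits)
qed

lemma DF_F: "inner (dirv (E i) (F k) q) (F l q) = G l i k q" by (simp add: G_def)

definition bk :: "nat \<Rightarrow> nat \<Rightarrow> real^3 \<Rightarrow> real^3" where
  "bk i j q = pd (E j) q (E i q) - pd (E i) q (E j q)"

lemma brk_pre:
  assumes q: "q \<in> U" and sm: "smooth_on U \<phi>"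
    and sym: "\<And>a b. pd (\<lambda>r. pd \<phi> r a) q b = pd (\<lambda>r. pd \<phi> r b) q a"
  shows "dirv (E i) (dirv (E j) \<phi>) q - dirv (E j) (dirv (E i) \<phi>) q = pd \<phi> q (bk i j q)"
proof -
  have A: "dirv (E i) (dirv (E j) \<phi>) q = pd \<phi> q (pd (E j) q (E i q)) + pd (\<lambda>r. pd \<phi> r (E i q)) q (E j q)"
    unfolding dirv_def by (rule pd_dir_gen[OF U sm smE q sym])
  have B: "dirv (E j) (dirv (E i) \<phi>) q = pd \<phi> q (pd (E i) q (E j q)) + pd (\<lambda>r. pd \<phi> r (E j q)) q (E i q)"
    unfolding dirv_def by (rule pd_dir_gen[OF U sm smE q sym])
  show ?thesis using A B sym[of "E i q" "E j q"] by (simp add: bk_def pd_linear_at(3)[OF U sm q])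
qed

lemma bk_expand: assumes q: "q \<in> U"
  shows "bk i j q = (\<Sum>k\<in>Idx. (G k i j q - G k j i q) *\<^sub>R E k q)"
proof -
  have "dirv (E i) (F j) q - dirv (E j) (F i) q = pd f q (bk i j q)"
    using brk_pre[OF q f_smooth schwarz_vec[OF U f_smooth q], of i j] by (simp add: dirf)
  then have "inner (pd f q (bk i j q)) (F k q) = G k i j q - G k j i q" for k
    by (metis DF_F inner_diff_left)
  then show ?thesis using expand3[OF q, of "bk i j q"] by simp
qed

lemma brk:
  assumes q: "q \<in> U" and sm: "smooth_on U \<phi>"
    and sym: "\<And>a b. pd (\<lambda>r. pd \<phi> r a) q b = pd (\<lambda>r. pd \<phi> r b) q a"
  shows "dirv (E i) (dirv (E j) \<phi>) q - dirv (E j) (dirv (E i) \<phi>) q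
           = (\<Sum>k\<in>Idx. (G k i j q - G k j i q) *\<^sub>R dirv (E k) \<phi> q)"
  unfolding brk_pre[OF q sm sym] bk_expand[OF q]
  by (simp add: pd_linear_at[OF U sm q] dirv_def)

lemma brk_real:
  fixes \<phi> :: "real^3 \<Rightarrow> real"
  assumes q: "q \<in> U" and sm: "smooth_on U \<phi>"
  shows "dirv (E i) (dirv (E j) \<phi>) q - dirv (E j) (dirv (E i) \<phi>) q
           = (\<Sum>k\<in>Idx. (G k i j q - G k j i q) * dirv (E k) \<phi> q)"
  using brk[OF q sm schwarz_scalar[OF U sm q]] by simp

lemma brk_vec:
  fixes \<phi> :: "real^3 \<Rightarrow> real^5"
  assumes q: "q \<in> U" and sm: "smooth_on U \<phi>"
  shows "dirv (E i) (dirv (E j) \<phi>) q - dirv (E j) (dirv (E i) \<phi>) q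
           = (\<Sum>k\<in>Idx. (G k i j q - G k j i q) *\<^sub>R dirv (E k) \<phi> q)"
  using brk[OF q sm schwarz_vec[OF U sm q]] .

end



declare One_nat_def [simp del]

context hyp begin

lemma sum3: "(\<Sum>k\<in>Idx. g k) = g 1 + g 2 + g 3" by (simp add: add.assoc)

lemma sum_dl: "l \<in> Idx \<Longrightarrow> (\<Sum>k\<in>Idx. g k * dl k l) = g l"
  by (auto simp: dl_def)

lemma dirv_cong: "q \<in> U \<Longrightarrow> \<forall>r\<in>U. \<phi> r = \<psi> r \<Longrightarrow> dirv X \<phi> q = dirv X \<psi> q"
  unfolding dirv_def using pd_cong_open[OF U] by metis

lemma dirv_minus: assumes q: "q \<in> U" and sm: "smooth_on U \<phi>" shows "dirv X (\<lambda>r. - \<phi> r) q = - dirv X \<phi> q"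
  unfolding dirv_def using pd_eq[OF has_derivative_minus[OF smooth_has_derivative[OF U sm q]]] by simp

lemma dirv_const: "dirv X (\<lambda>r. c) q = 0"
  unfolding dirv_def by (rule pd_const)

lemma lk_vals: "lk 1 = lam" "lk 2 = (\<lambda>q. 0)" "lk 3 = (\<lambda>q. - lam q)"
  by (auto simp: lk_def fun_eq_iff)

lemma dNN: assumes q: "q \<in> U" and j: "j \<in> Idx"
  shows "dirv (E i) (dirv (E j) N) q = - (dirv (E i) (lk j) q *\<^sub>R F j q + lk j q *\<^sub>R dirv (E i) (F j) q)"
proof -
  have "dirv (E i) (dirv (E j) N) q = dirv (E i) (\<lambda>r. - (lk j r *\<^sub>R F j r)) q"
    by (rule dirv_cong[OF q]) (use dirN j in auto)
  also have "\<dots> = - (dirv (E i) (lk j) q *\<^sub>R F j q + lk j q *\<^sub>R dirv (E i) (F j) q)"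
    unfolding dirv_def
    using pd_eq[OF has_derivative_minus[OF has_derivative_scaleR[OF smooth_has_derivative[OF U smlk q] smooth_has_derivative[OF U smF q]]]]
    by simp
  finally show ?thesis .
qed

lemma codazzi: assumes q: "q \<in> U" and ijl: "i \<in> Idx" "j \<in> Idx" "l \<in> Idx"
  shows "- dirv (E i) (lk j) q * dl j l - lk j q * G l i j q + dirv (E j) (lk i) q * dl i l + lk i q * G l j i q
         = - lk l q * (G l i j q - G l j i q)"
proof -
  have B: "dirv (E i) (dirv (E j) N) q - dirv (E j) (dirv (E i) N) q
           = (\<Sum>k\<in>Idx. (G k i j q - G k j i q) *\<^sub>R dirv (E k) N q)"
    by (rule brk_vec[OF q N_smooth])
  have L: "inner (dirv (E i) (dirv (E j) N) q - dirv (E j) (dirv (E i) N) q) (F l q)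
     = - dirv (E i) (lk j) q * dl j l - lk j q * G l i j q + dirv (E j) (lk i) q * dl i l + lk i q * G l j i q"
    unfolding dNN[OF q ijl(2)] dNN[OF q ijl(1)]
    using orthF[OF q ijl(2,3)] orthF[OF q ijl(1,3)]
    by (simp add: inner_diff_left inner_add_left DF_F algebra_simps)
  have "inner (\<Sum>k\<in>Idx. (G k i j q - G k j i q) *\<^sub>R dirv (E k) N q) (F l q)
        = (\<Sum>k\<in>Idx. (- (G k i j q - G k j i q) * lk k q) * dl k l)"
    unfolding inner_sum_left
    by (intro sum.cong refl) (use dirN[OF q] orthF[OF q _ ijl(3)] in \<open>auto simp: algebra_simps\<close>)
  also have "\<dots> = - lk l q * (G l i j q - G l j i q)" by (subst sum_dl[OF ijl(3)]) (simp_all add: algebra_simps)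
  finally show ?thesis using B L by simp
qed

lemma PP: assumes q: "q \<in> U" and ijkl: "i \<in> Idx" "j \<in> Idx" "k \<in> Idx" "l \<in> Idx"
  shows "inner (dirv (E j) (F k) q) (dirv (E i) (F l) q)
         = dl j k * dl i l + lk j q * dl j k * (lk i q * dl i l) + (\<Sum>m\<in>Idx. G m j k q * G m i l q)"
  using parseval[OF q, of "dirv (E j) (F k) q" "dirv (E i) (F l) q"]
    DF_f[OF q ijkl(2,3)] DF_f[OF q ijkl(1,4)] DF_N[OF q ijkl(2,3)] DF_N[OF q ijkl(1,4)]
  by (simp add: DF_F)

lemma gauss: assumes q: "q \<in> U" and ijkl: "i \<in> Idx" "j \<in> Idx" "k \<in> Idx" "l \<in> Idx"
  shows "dirv (E i) (G l j k) q - dirv (E j) (G l i k) q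
          - inner (dirv (E j) (F k) q) (dirv (E i) (F l) q) + inner (dirv (E i) (F k) q) (dirv (E j) (F l) q)
         = (\<Sum>m\<in>Idx. (G m i j q - G m j i q) * G l m k q)"
proof -
  have B: "dirv (E i) (dirv (E j) (F k)) q - dirv (E j) (dirv (E i) (F k)) q
           = (\<Sum>m\<in>Idx. (G m i j q - G m j i q) *\<^sub>R dirv (E m) (F k) q)"
    by (rule brk_vec[OF q smF])
  have D: "dirv (E a) (G l b k) q = inner (dirv (E a) (dirv (E b) (F k)) q) (F l q) + inner (dirv (E b) (F k) q) (dirv (E a) (F l) q)" for a b
    unfolding G_def dirv_def by (rule pd_inner[OF U smDir[OF smF, unfolded dirv_def] smF q])
  have "inner (\<Sum>m\<in>Idx. (G m i j q - G m j i q) *\<^sub>R dirv (E m) (F k) q) (F l q) = (\<Sum>m\<in>Idx. (G m i j q - G m j i q) * G l m k q)"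
    unfolding inner_sum_left by (simp add: DF_F)
  then have "inner (dirv (E i) (dirv (E j) (F k)) q - dirv (E j) (dirv (E i) (F k)) q) (F l q) = (\<Sum>m\<in>Idx. (G m i j q - G m j i q) * G l m k q)"
    using B by simp
  then show ?thesis using D[of i j] D[of j i] by (simp add: inner_diff_left inner_diff_right inner_commute)
qed

end



context hyp begin

definition uu where "uu = G 2 3 1"
definition vv where "vv = (\<lambda>q. dirv (E 2) lam q * inverse (lam q))"

lemma smuu: "smooth_on U uu" unfolding uu_def by (rule smG)
lemma smvv: "smooth_on U vv" unfolding vv_def
  by (rule smooth_mult[OF U smDir[OF lam_smooth] smooth_inverse[OF U lam_smooth]]) (use lam_pos in auto)

lemma cod_inst: assumes q: "q \<in> U"
  shows "dirv (E 2) lam q = - lam q * G 1 1 2 q" "G 2 2 1 q = 0" "G 3 1 2 q = 2 * G 3 2 1 q"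
    "dirv (E 2) lam q = - lam q * G 3 3 2 q" "G 2 2 3 q = 0" "G 2 1 3 q = - G 2 3 1 q"
proof -
  have lp: "lam q > 0" using lam_pos q by blast
  have dm: "dirv X (\<lambda>r. - lam r) q = - dirv X lam q" for X using dirv_minus[OF q lam_smooth] .
  note s = lk_vals dl_def dirv_const dm
  have 1: "dirv (E 2) lam q + lam q * G 1 2 1 q = - lam q * (G 1 1 2 q - G 1 2 1 q)"
    using codazzi[OF q, of 1 2 1] by (simp add: s)
  show "dirv (E 2) lam q = - lam q * G 1 1 2 q" using 1 by (simp add: algebra_simps)
  have 2: "lam q * G 2 2 1 q = 0" using codazzi[OF q, of 1 2 2] by (simp add: s)
  show "G 2 2 1 q = 0" using 2 lp by simp
  have 3: "lam q * G 3 2 1 q = lam q * (G 3 1 2 q - G 3 2 1 q)" using codazzi[OF q, of 1 2 3] by (simp add: s)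
  show "G 3 1 2 q = 2 * G 3 2 1 q" using 3 lp by (simp add: algebra_simps)
  have 4: "dirv (E 2) lam q + lam q * G 3 2 3 q = lam q * (G 3 2 3 q - G 3 3 2 q)" using codazzi[OF q, of 2 3 3] by (simp add: s)
  show "dirv (E 2) lam q = - lam q * G 3 3 2 q" using 4 by (simp add: algebra_simps)
  have 5: "lam q * G 2 2 3 q = 0" using codazzi[OF q, of 2 3 2] by (simp add: s)
  show "G 2 2 3 q = 0" using 5 lp by simp
  have 6: "lam q * G 2 1 3 q + lam q * G 2 3 1 q = 0" using codazzi[OF q, of 1 3 2] by (simp add: s)
  have "lam q * (G 2 1 3 q + G 2 3 1 q) = 0" using 6 by (simp add: algebra_simps)
  then show "G 2 1 3 q = - G 2 3 1 q" using lp by (simp add: add_eq_0_iff)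
qed

lemma Gtab: assumes q: "q \<in> U"
  shows "G 2 1 1 q = vv q" "G 2 2 1 q = 0" "G 2 3 1 q = uu q"
    "G 1 1 2 q = - vv q" "G 1 2 2 q = 0" "G 1 3 2 q = - uu q"
    "G 3 2 1 q = uu q / 2" "G 1 1 3 q = - G 3 1 1 q" "G 1 2 3 q = - uu q / 2" "G 1 3 3 q = - G 3 3 1 q"
    "G 3 1 2 q = uu q" "G 3 2 2 q = 0" "G 3 3 2 q = - vv q"
    "G 2 1 3 q = - uu q" "G 2 2 3 q = 0" "G 2 3 3 q = vv q"
    "G 1 i 1 q = 0" "G 2 i 2 q = 0" "G 3 i 3 q = 0"
proof -
  have lp: "lam q > 0" using lam_pos q by blast
  note ci = cod_inst[OF q]
  have a: "G l i k q = - G k i l q" if "k \<in> Idx" "l \<in> Idx" for l i k using G_antisym[OF q that] .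
  show g112: "G 1 1 2 q = - vv q" using ci(1) lp by (simp add: vv_def field_simps)
  show "G 2 1 1 q = vv q" using a[where l=2 and i=1 and k=1] g112 by simp
  show "G 2 2 1 q = 0" by (rule ci(2))
  show "G 2 3 1 q = uu q" by (simp add: uu_def)
  show "G 1 2 2 q = 0" using a[where l=1 and i=2 and k=2] ci(2) by simp
  show "G 2 1 3 q = - uu q" using ci(6) by (simp add: uu_def)
  show g312: "G 3 1 2 q = uu q" using a[where l=3 and i=1 and k=2] ci(6) by (simp add: uu_def)
  show "G 1 3 2 q = - uu q" using a[where l=1 and i=3 and k=2] by (simp add: uu_def)
  show g321: "G 3 2 1 q = uu q / 2" using ci(3) g312 by simp
  show "G 1 1 3 q = - G 3 1 1 q" using a[where l=1 and i=1 and k=3] by simp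
  show "G 1 2 3 q = - uu q / 2" using a[where l=1 and i=2 and k=3] g321 by simp
  show "G 1 3 3 q = - G 3 3 1 q" using a[where l=1 and i=3 and k=3] by simp
  show "G 3 2 2 q = 0" using a[where l=3 and i=2 and k=2] ci(5) by simp
  show g332: "G 3 3 2 q = - vv q" using ci(4) lp by (simp add: vv_def field_simps)
  show "G 2 2 3 q = 0" by (rule ci(5))
  show "G 2 3 3 q = vv q" using a[where l=2 and i=3 and k=3] g332 by simp
  show "G 1 i 1 q = 0" "G 2 i 2 q = 0" "G 3 i 3 q = 0" using G_diag[OF q] by auto
qed

end



context hyp begin

lemma dG: assumes q: "q \<in> U"
  shows "dirv X (G 1 2 2) q = 0" "dirv X (G 3 2 2) q = 0"
    "dirv X (G 1 1 2) q = - dirv X vv q" "dirv X (G 3 1 2) q = dirv X uu q"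
    "dirv X (G 2 3 3) q = dirv X vv q" "dirv X (G 2 1 3) q = - dirv X uu q"
    "dirv X (G 1 3 2) q = - dirv X uu q"
proof -
  show "dirv X (G 1 2 2) q = 0" using dirv_cong[OF q, of "G 1 2 2" "\<lambda>r. 0"] Gtab dirv_const by metis
  show "dirv X (G 3 2 2) q = 0" using dirv_cong[OF q, of "G 3 2 2" "\<lambda>r. 0"] Gtab dirv_const by metis
  show "dirv X (G 1 1 2) q = - dirv X vv q"
    using dirv_cong[OF q, of "G 1 1 2" "\<lambda>r. - vv r"] Gtab dirv_minus[OF q smvv] by metis
  show "dirv X (G 3 1 2) q = dirv X uu q"
    using dirv_cong[OF q, of "G 3 1 2" uu] Gtab by metis
  show "dirv X (G 2 3 3) q = dirv X vv q"
    using dirv_cong[OF q, of "G 2 3 3" vv] Gtab by metis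
  show "dirv X (G 2 1 3) q = - dirv X uu q"
    using dirv_cong[OF q, of "G 2 1 3" "\<lambda>r. - uu r"] Gtab dirv_minus[OF q smuu] by metis
  show "dirv X (G 1 3 2) q = - dirv X uu q"
    using dirv_cong[OF q, of "G 1 3 2" "\<lambda>r. - uu r"] Gtab dirv_minus[OF q smuu] by metis
qed

lemma gauss_inst: assumes q: "q \<in> U"
  shows "dirv (E 2) vv q = 1 + (vv q)\<^sup>2 - (uu q)\<^sup>2"
    "dirv (E 2) uu q = 2 * uu q * vv q"
    "dirv (E 1) vv q + dirv (E 3) uu q = 0"
    "dirv (E 3) vv q = dirv (E 1) uu q"
proof -
  note s = Gtab[OF q] dG[OF q] PP[OF q] sum3 dl_def lk_vals
  show "dirv (E 2) vv q = 1 + (vv q)\<^sup>2 - (uu q)\<^sup>2"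
    using gauss[OF q, where i=1 and j=2 and k=2 and l=1] by (simp add: s power2_eq_square algebra_simps)
  show "dirv (E 2) uu q = 2 * uu q * vv q"
    using gauss[OF q, where i=1 and j=2 and k=2 and l=3] by (simp add: s power2_eq_square algebra_simps)
  show "dirv (E 1) vv q + dirv (E 3) uu q = 0"
    using gauss[OF q, where i=1 and j=3 and k=3 and l=2] by (simp add: s power2_eq_square algebra_simps)
  show "dirv (E 3) vv q = dirv (E 1) uu q"
    using gauss[OF q, where i=1 and j=3 and k=2 and l=1] by (simp add: s power2_eq_square algebra_simps)
qed

end



context hyp begin

definition lapF :: "(real^3 \<Rightarrow> real) \<Rightarrow> real^3 \<Rightarrow> real" where
  "lapF \<phi> q = (\<Sum>k\<in>Idx. dirv (E k) (dirv (E k) \<phi>) q) + (\<Sum>k\<in>Idx. (\<Sum>j\<in>Idx. G j j k q) * dirv (E k) \<phi> q)"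

lemma dmult: fixes \<phi> \<psi> :: "real^3 \<Rightarrow> real" assumes "q \<in> U" "smooth_on U \<phi>" "smooth_on U \<psi>" shows
    "dirv X (\<lambda>r. \<phi> r * \<psi> r) q = dirv X \<phi> q * \<psi> q + \<phi> q * dirv X \<psi> q"
  unfolding dirv_def using pd_mult[OF U assms(2,3,1)] by simp
lemma dadd: fixes \<phi> \<psi> :: "real^3 \<Rightarrow> real" assumes "q \<in> U" "smooth_on U \<phi>" "smooth_on U \<psi>" shows
    "dirv X (\<lambda>r. \<phi> r + \<psi> r) q = dirv X \<phi> q + dirv X \<psi> q"
  unfolding dirv_def using pd_add[OF U assms(2,3,1)] by simp
lemma ddiff: fixes \<phi> \<psi> :: "real^3 \<Rightarrow> real" assumes "q \<in> U" "smooth_on U \<phi>" "smooth_on U \<psi>" shows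
    "dirv X (\<lambda>r. \<phi> r - \<psi> r) q = dirv X \<phi> q - dirv X \<psi> q"
  unfolding dirv_def using pd_diff[OF U assms(2,3,1)] by simp

lemma smDk: "smooth_on U \<phi> \<Longrightarrow> smooth_on U (dirv (E k) \<phi>)" by (rule smDir)

lemma lapF_cong: assumes q: "q \<in> U" and e: "\<forall>r\<in>U. \<phi> r = \<psi> r" shows "lapF \<phi> q = lapF \<psi> q"
proof -
  have 1: "\<forall>r\<in>U. dirv (E k) \<phi> r = dirv (E k) \<psi> r" for k using dirv_cong e by blast
  then have "dirv (E k) (dirv (E k) \<phi>) q = dirv (E k) (dirv (E k) \<psi>) q" for k using dirv_cong[OF q] by blast
  then show ?thesis using 1 q unfolding lapF_def by simp
qed

lemma lapF_add: assumes q: "q \<in> U" and sm: "smooth_on U \<phi>" "smooth_on U \<psi>"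
  shows "lapF (\<lambda>r. \<phi> r + \<psi> r) q = lapF \<phi> q + lapF \<psi> q"
proof -
  have 1: "\<forall>r\<in>U. dirv (E k) (\<lambda>r. \<phi> r + \<psi> r) r = dirv (E k) \<phi> r + dirv (E k) \<psi> r" for k
    using dadd sm by blast
  have 2: "dirv (E k) (dirv (E k) (\<lambda>r. \<phi> r + \<psi> r)) q = dirv (E k) (dirv (E k) \<phi>) q + dirv (E k) (dirv (E k) \<psi>) q" for k
    using dirv_cong[OF q 1] dadd[OF q smDk[OF sm(1)] smDk[OF sm(2)]] by simp
  show ?thesis unfolding lapF_def using 1 2 q by (simp add: sum3 algebra_simps)
qed

lemma lapF_mult: assumes q: "q \<in> U" and sm: "smooth_on U \<phi>" "smooth_on U \<psi>"
  shows "lapF (\<lambda>r. \<phi> r * \<psi> r) q = \<phi> q * lapF \<psi> q + \<psi> q * lapF \<phi> q + 2 * (\<Sum>k\<in>Idx. dirv (E k) \<phi> q * dirv (E k) \<psi> q)"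
proof -
  have 1: "\<forall>r\<in>U. dirv (E k) (\<lambda>r. \<phi> r * \<psi> r) r = dirv (E k) \<phi> r * \<psi> r + \<phi> r * dirv (E k) \<psi> r" for k
    using dmult sm by blast
  have 2: "dirv (E k) (dirv (E k) (\<lambda>r. \<phi> r * \<psi> r)) q
     = dirv (E k) (dirv (E k) \<phi>) q * \<psi> q + 2 * (dirv (E k) \<phi> q * dirv (E k) \<psi> q) + \<phi> q * dirv (E k) (dirv (E k) \<psi>) q" for k
  proof -
    have "dirv (E k) (dirv (E k) (\<lambda>r. \<phi> r * \<psi> r)) q = dirv (E k) (\<lambda>r. dirv (E k) \<phi> r * \<psi> r + \<phi> r * dirv (E k) \<psi> r) q"
      by (rule dirv_cong[OF q 1])
    also have "\<dots> = dirv (E k) (\<lambda>r. dirv (E k) \<phi> r * \<psi> r) q + dirv (E k) (\<lambda>r. \<phi> r * dirv (E k) \<psi> r) q"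
      by (rule dadd[OF q smooth_mult[OF U smDk[OF sm(1)] sm(2)] smooth_mult[OF U sm(1) smDk[OF sm(2)]]])
    also have "\<dots> = dirv (E k) (dirv (E k) \<phi>) q * \<psi> q + 2 * (dirv (E k) \<phi> q * dirv (E k) \<psi> q) + \<phi> q * dirv (E k) (dirv (E k) \<psi>) q"
      unfolding dmult[OF q smDk[OF sm(1)] sm(2)] dmult[OF q sm(1) smDk[OF sm(2)]] by (simp add: algebra_simps)
    finally show ?thesis .
  qed
  show ?thesis unfolding lapF_def using 1 2 q by (simp add: sum3 algebra_simps)
qed

lemma lapF_const: "lapF (\<lambda>r. c) q = 0"
proof -
  have "dirv (E k) (\<lambda>r. c) = (\<lambda>r. 0)" for k by (simp add: fun_eq_iff dirv_const)
  then show ?thesis unfolding lapF_def by (simp add: dirv_const)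
qed

lemma lap_uu: assumes q: "q \<in> U" shows "lapF uu q = 0"
proof -
  note gi = gauss_inst
  have a: "dirv (E 3) (dirv (E 3) uu) q = - dirv (E 3) (dirv (E 1) vv) q"
  proof -
    have "dirv (E 3) (dirv (E 3) uu) q = dirv (E 3) (\<lambda>r. - dirv (E 1) vv r) q"
    proof (rule dirv_cong[OF q], rule ballI)
      fix r assume r: "r \<in> U" show "dirv (E 3) uu r = - dirv (E 1) vv r" using gi(3)[OF r] by linarith
    qed
    then show ?thesis using dirv_minus[OF q smDk[OF smvv]] by simp
  qed
  have b: "dirv (E 1) (dirv (E 1) uu) q = dirv (E 1) (dirv (E 3) vv) q"
    by (rule dirv_cong[OF q]) (use gi(4) in auto)
  have c: "dirv (E 2) (dirv (E 2) uu) q = 2 * (dirv (E 2) uu q * vv q + uu q * dirv (E 2) vv q)"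
  proof -
    have "dirv (E 2) (dirv (E 2) uu) q = dirv (E 2) (\<lambda>r. 2 * (uu r * vv r)) q"
      by (rule dirv_cong[OF q]) (use gi(2) in auto)
    also have "\<dots> = dirv (E 2) (\<lambda>r. 2 * uu r) q * vv q + 2 * uu q * dirv (E 2) vv q"
      using dmult[OF q smooth_mult[OF U smooth_const smuu] smvv] by (simp add: mult.assoc)
    also have "dirv (E 2) (\<lambda>r. 2 * uu r) q = 2 * dirv (E 2) uu q"
      using dmult[OF q smooth_const smuu, of _ 2] by (simp add: dirv_const)
    finally show ?thesis by (simp add: algebra_simps)
  qed
  have br: "dirv (E 1) (dirv (E 3) vv) q - dirv (E 3) (dirv (E 1) vv) q
       = (\<Sum>k\<in>Idx. (G k 1 3 q - G k 3 1 q) * dirv (E k) vv q)" by (rule brk_real[OF q smvv])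
  have g3: "dirv (E 1) vv q = - dirv (E 3) uu q" using gi(3)[OF q] by linarith
  show ?thesis unfolding lapF_def using a b c br g3 gi(4)[OF q]
    by (simp add: sum3 Gtab[OF q] algebra_simps)
qed

lemma lap_vv: assumes q: "q \<in> U" shows "lapF vv q = 0"
proof -
  note gi = gauss_inst
  have a: "dirv (E 1) (dirv (E 1) vv) q = - dirv (E 1) (dirv (E 3) uu) q"
  proof -
    have "dirv (E 1) (dirv (E 1) vv) q = dirv (E 1) (\<lambda>r. - dirv (E 3) uu r) q"
    proof (rule dirv_cong[OF q], rule ballI)
      fix r assume r: "r \<in> U" show "dirv (E 1) vv r = - dirv (E 3) uu r" using gi(3)[OF r] by linarith
    qed
    then show ?thesis using dirv_minus[OF q smDk[OF smuu]] by simp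
  qed
  have b: "dirv (E 3) (dirv (E 3) vv) q = dirv (E 3) (dirv (E 1) uu) q"
    by (rule dirv_cong[OF q]) (use gi(4) in auto)
  have c: "dirv (E 2) (dirv (E 2) vv) q = 2 * vv q * dirv (E 2) vv q - 2 * uu q * dirv (E 2) uu q"
  proof -
    have "dirv (E 2) (dirv (E 2) vv) q = dirv (E 2) (\<lambda>r. (1 + vv r * vv r) - uu r * uu r) q"
      by (rule dirv_cong[OF q]) (use gi(1) in \<open>auto simp: power2_eq_square\<close>)
    also have "\<dots> = dirv (E 2) (\<lambda>r. 1 + vv r * vv r) q - dirv (E 2) (\<lambda>r. uu r * uu r) q"
      by (rule ddiff[OF q smooth_add[OF U smooth_const smooth_mult[OF U smvv smvv]] smooth_mult[OF U smuu smuu]])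
    also have "\<dots> = 2 * vv q * dirv (E 2) vv q - 2 * uu q * dirv (E 2) uu q"
      using dadd[OF q smooth_const smooth_mult[OF U smvv smvv]] dmult[OF q smvv smvv] dmult[OF q smuu smuu] dirv_const
      by simp
    finally show ?thesis .
  qed
  have br: "dirv (E 1) (dirv (E 3) uu) q - dirv (E 3) (dirv (E 1) uu) q
       = (\<Sum>k\<in>Idx. (G k 1 3 q - G k 3 1 q) * dirv (E k) uu q)" by (rule brk_real[OF q smuu])
  have g3: "dirv (E 1) vv q = - dirv (E 3) uu q" using gi(3)[OF q] by linarith
  show ?thesis unfolding lapF_def using a b c br g3 gi(4)[OF q]
    by (simp add: sum3 Gtab[OF q] algebra_simps)
qed

definition hh where "hh = (\<lambda>r. (uu r - 1) * (uu r - 1) + vv r * vv r)"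

lemma lap_hh: assumes q: "q \<in> U"
  shows "lapF hh q = 2 * (\<Sum>k\<in>Idx. (dirv (E k) uu q)\<^sup>2 + (dirv (E k) vv q)\<^sup>2)"
proof -
  have sm1: "smooth_on U (\<lambda>r. uu r - 1)" using smooth_diff[OF U smuu smooth_const] .
  have d1: "dirv (E k) (\<lambda>r. uu r - 1) q = dirv (E k) uu q" for k using ddiff[OF q smuu smooth_const] dirv_const by simp
  have l1: "lapF (\<lambda>r. uu r - 1) q = 0"
  proof -
    have "lapF (\<lambda>r. uu r + (- 1)) q = lapF uu q + lapF (\<lambda>r. - 1) q" by (rule lapF_add[OF q smuu smooth_const])
    then show ?thesis using lap_uu[OF q] lapF_const by simp
  qed
  have "lapF hh q = lapF (\<lambda>r. (uu r - 1) * (uu r - 1)) q + lapF (\<lambda>r. vv r * vv r) q"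
    unfolding hh_def by (rule lapF_add[OF q smooth_mult[OF U sm1 sm1] smooth_mult[OF U smvv smvv]])
  also have "\<dots> = 2 * (\<Sum>k\<in>Idx. (dirv (E k) uu q)\<^sup>2 + (dirv (E k) vv q)\<^sup>2)"
    unfolding lapF_mult[OF q sm1 sm1] lapF_mult[OF q smvv smvv] l1 lap_vv[OF q] d1
    by (simp add: sum3 power2_eq_square algebra_simps)
  finally show ?thesis .
qed

end



definition nat3 :: "3 \<Rightarrow> nat" where "nat3 c = (if c = 1 then 1 else if c = 2 then 2 else 3)"

lemma sum_nat3: "(\<Sum>c\<in>UNIV. g (nat3 c)) = (\<Sum>k\<in>{1,2,3}. g k)"
  by (simp add: sum_3 nat3_def add.assoc)

context hyp begin

definition Em :: "real^3 \<Rightarrow> real^3^3" where "Em q = (\<chi> a c. E (nat3 c) q $ a)"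
definition Pm :: "real^3 \<Rightarrow> real^3^3" where "Pm q = (\<chi> a b. \<Sum>k\<in>Idx. E k q $ a * E k q $ b)"

lemma Pm_eq: "Pm q = Em q ** transpose (Em q)"
  unfolding Pm_def Em_def matrix_matrix_mult_def transpose_def
  by (simp add: vec_eq_iff sum_nat3[of "\<lambda>k. E k q $ _ * E k q $ _"])

lemma dir_expand: assumes q: "q \<in> U" and sm: "smooth_on U \<phi>"
  shows "dirv (E k) \<phi> q = (\<Sum>a\<in>UNIV. E k q $ a *\<^sub>R pd \<phi> q (axis a 1))"
  unfolding dirv_def by (rule lin_expand[OF bounded_linear.linear[OF smooth_pd_linear[OF U sm q]]])

lemma GP: assumes q: "q \<in> U" shows "Gmat f q ** Pm q = mat 1"
proof -
  have "(Gmat f q ** Pm q) $ a $ b = mat 1 $ a $ b" for a b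
  proof -
    have "(Gmat f q ** Pm q) $ a $ b
        = (\<Sum>c\<in>UNIV. inner (pd f q (axis a 1)) (pd f q (axis c 1)) * (\<Sum>k\<in>Idx. E k q $ c * E k q $ b))"
      by (simp add: matrix_matrix_mult_def Gmat_def gm_def Pm_def)
    also have "\<dots> = (\<Sum>k\<in>Idx. (\<Sum>c\<in>UNIV. E k q $ c * inner (pd f q (axis a 1)) (pd f q (axis c 1))) * E k q $ b)"
      by (simp add: sum_distrib_left sum_distrib_right distrib_left sum.distrib mult_ac)
    also have "\<dots> = (\<Sum>k\<in>Idx. inner (pd f q (axis a 1)) (F k q) * E k q $ b)"
      using dir_expand[OF q f_smooth] by (simp add: F_def inner_sum_right)
    also have "\<dots> = (\<Sum>k\<in>Idx. inner (pd f q (axis a 1)) (F k q) *\<^sub>R E k q) $ b"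
      by simp
    also have "\<dots> = axis a 1 $ b" using expand3[OF q, of "axis a 1"] by simp
    also have "\<dots> = mat 1 $ a $ b" by (simp add: axis_def mat_def)
    finally show ?thesis .
  qed
  then show ?thesis by (simp add: vec_eq_iff)
qed

lemma PG: "q \<in> U \<Longrightarrow> Pm q ** Gmat f q = mat 1"
  using GP matrix_left_right_inverse by blast

lemma minv: assumes q: "q \<in> U" shows "matrix_inv (Gmat f q) = Pm q"
proof -
  have ex: "\<exists>A'. Gmat f q ** A' = mat 1 \<and> A' ** Gmat f q = mat 1" using GP[OF q] PG[OF q] by blast
  have "Gmat f q ** matrix_inv (Gmat f q) = mat 1 \<and> matrix_inv (Gmat f q) ** Gmat f q = mat 1"
    unfolding matrix_inv_def by (rule someI_ex[OF ex])
  then have "matrix_inv (Gmat f q) = matrix_inv (Gmat f q) ** (Gmat f q ** Pm q)"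
    using GP[OF q] by (simp add: matrix_mul_rid)
  also have "\<dots> = Pm q" using \<open>Gmat f q ** matrix_inv (Gmat f q) = mat 1 \<and> _\<close>
    by (simp add: matrix_mul_assoc matrix_mul_lid)
  finally show ?thesis .
qed

lemma detG: assumes q: "q \<in> U" shows "det (Gmat f q) * (det (Em q) * det (Em q)) = 1"
proof -
  have "det (Gmat f q ** Pm q) = 1" using GP[OF q] by simp
  then show ?thesis by (simp add: det_mul Pm_eq det_transpose)
qed

lemma grad_frame: assumes q: "q \<in> U" and sm: "smooth_on U \<phi>"
  shows "grad_sq f \<phi> q = (\<Sum>k\<in>Idx. (dirv (E k) \<phi> q)\<^sup>2)"
proof -
  have "grad_sq f \<phi> q = (\<Sum>a\<in>UNIV. \<Sum>b\<in>UNIV. (\<Sum>k\<in>Idx. E k q $ a * E k q $ b) * pd \<phi> q (axis a 1) * pd \<phi> q (axis b 1))"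
    by (simp add: grad_sq_def minv[OF q] Pm_def)
  also have "\<dots> = (\<Sum>k\<in>Idx. (\<Sum>a\<in>UNIV. E k q $ a * pd \<phi> q (axis a 1)) * (\<Sum>b\<in>UNIV. E k q $ b * pd \<phi> q (axis b 1)))"
    by (simp add: sum_distrib_left sum_distrib_right distrib_left sum.distrib mult_ac)
  also have "\<dots> = (\<Sum>k\<in>Idx. (dirv (E k) \<phi> q)\<^sup>2)"
    using dir_expand[OF q sm] by (simp add: power2_eq_square)
  finally show ?thesis .
qed

end



definition dt :: "real^3 \<Rightarrow> real^3 \<Rightarrow> real^3 \<Rightarrow> real" where
  "dt x y z = x$1*y$2*z$3 + y$1*z$2*x$3 + z$1*x$2*y$3 - x$1*z$2*y$3 - y$1*x$2*z$3 - z$1*y$2*x$3"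

lemma dt_lin: "dt (a *\<^sub>R x + b *\<^sub>R y + c *\<^sub>R z) y z = a * dt x y z"
  "dt x (a *\<^sub>R x + b *\<^sub>R y + c *\<^sub>R z) z = b * dt x y z"
  "dt x y (a *\<^sub>R x + b *\<^sub>R y + c *\<^sub>R z) = c * dt x y z"
  by (simp_all add: dt_def algebra_simps)

lemma dt_deriv:
  assumes x: "(x has_derivative x') (at q)" and y: "(y has_derivative y') (at q)" and z: "(z has_derivative z') (at q)"
  shows "((\<lambda>r. dt (x r) (y r) (z r)) has_derivative
           (\<lambda>w. dt (x' w) (y q) (z q) + dt (x q) (y' w) (z q) + dt (x q) (y q) (z' w))) (at q)"
proof -
  have cx: "((\<lambda>r. x r $ i) has_derivative (\<lambda>w. x' w $ i)) (at q)" for i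
    using bounded_linear.has_derivative[OF bounded_linear_vec_nth x] .
  have cy: "((\<lambda>r. y r $ i) has_derivative (\<lambda>w. y' w $ i)) (at q)" for i
    using bounded_linear.has_derivative[OF bounded_linear_vec_nth y] .
  have cz: "((\<lambda>r. z r $ i) has_derivative (\<lambda>w. z' w $ i)) (at q)" for i
    using bounded_linear.has_derivative[OF bounded_linear_vec_nth z] .
  show ?thesis unfolding dt_def
    by (rule has_derivative_eq_rhs, (rule has_derivative_diff has_derivative_add has_derivative_mult cx cy cz)+)
       (simp add: fun_eq_iff algebra_simps)
qed

context hyp begin

definition DE where "DE q = dt (E 1 q) (E 2 q) (E 3 q)"
definition th where "th b q v = inner (pd f q v) (F b q)"

lemma detEm: "det (Em q) = DE q"
  by (simp add: det_3 Em_def nat3_def DE_def dt_def algebra_simps)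

lemma DE_ne: "q \<in> U \<Longrightarrow> DE q \<noteq> 0"
  using detG[of q] by (auto simp: detEm)

lemma sqrt_detG: assumes q: "q \<in> U" shows "sqrt (det (Gmat f q)) = inverse \<bar>DE q\<bar>"
proof -
  have "det (Gmat f q) = inverse (DE q * DE q)" using detG[OF q] DE_ne[OF q]
    by (simp add: detEm field_simps)
  then show ?thesis by (simp add: real_sqrt_inverse real_sqrt_abs2)
qed

lemma DE_deriv: assumes q: "q \<in> U"
  shows "(DE has_derivative (\<lambda>w. dt (pd (E 1) q w) (E 2 q) (E 3 q) + dt (E 1 q) (pd (E 2) q w) (E 3 q)
            + dt (E 1 q) (E 2 q) (pd (E 3) q w))) (at q)"
  unfolding DE_def[abs_def]
  by (rule dt_deriv[OF smooth_has_derivative[OF U smE q] smooth_has_derivative[OF U smE q] smooth_has_derivative[OF U smE q]])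

lemma v_exp: "q \<in> U \<Longrightarrow> v = th 1 q v *\<^sub>R E 1 q + th 2 q v *\<^sub>R E 2 q + th 3 q v *\<^sub>R E 3 q"
  using expand3[of q v] by (simp add: th_def add.assoc)

lemma cramer3: assumes q: "q \<in> U"
  shows "dt v (E 2 q) (E 3 q) = th 1 q v * DE q" "dt (E 1 q) v (E 3 q) = th 2 q v * DE q"
    "dt (E 1 q) (E 2 q) v = th 3 q v * DE q"
proof -
  note e = v_exp[OF q, of v]
  show "dt v (E 2 q) (E 3 q) = th 1 q v * DE q"
    using arg_cong[OF e, of "\<lambda>v. dt v (E 2 q) (E 3 q)"] dt_lin(1) by (simp add: DE_def)
  show "dt (E 1 q) v (E 3 q) = th 2 q v * DE q"
    using arg_cong[OF e, of "\<lambda>v. dt (E 1 q) v (E 3 q)"] dt_lin(2) by (simp add: DE_def)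
  show "dt (E 1 q) (E 2 q) v = th 3 q v * DE q"
    using arg_cong[OF e, of "\<lambda>v. dt (E 1 q) (E 2 q) v"] dt_lin(3) by (simp add: DE_def)
qed

lemma pd_DE: assumes q: "q \<in> U"
  shows "pd DE q w = (\<Sum>b\<in>Idx. th b q (pd (E b) q w)) * DE q"
  using pd_eq[OF DE_deriv[OF q]] cramer3[OF q] by (simp add: sum3 algebra_simps)

lemma th_linear: assumes q: "q \<in> U" shows "bounded_linear (th b q)"
proof -
  have "bounded_linear (\<lambda>v. inner (pd f q v) (F b q))"
    using bounded_linear_compose[OF bounded_linear_inner_left smooth_pd_linear[OF U f_smooth q]] .
  then show ?thesis unfolding th_def[abs_def] by simp
qed

lemma th_E: assumes "q \<in> U" "b \<in> Idx" "m \<in> Idx" shows "th b q (E m q) = dl m b"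
proof -
  have "pd f q (E m q) = F m q" by (simp add: F_def dirv_def)
  then show ?thesis using orthF[OF assms(1,3,2)] by (simp add: th_def)
qed

lemma trace: assumes q: "q \<in> U"
  shows "(\<Sum>a\<in>UNIV. pd (E k) q (axis a 1) $ a) = (\<Sum>b\<in>Idx. th b q (pd (E k) q (E b q)))"
proof -
  have L: "bounded_linear (pd (E k) q)" by (rule smooth_pd_linear[OF U smE q])
  have TL: "linear (\<lambda>v. th b q (pd (E k) q v))" for b
    using bounded_linear.linear[OF bounded_linear_compose[OF th_linear[OF q] L]] by simp
  have "(\<Sum>a\<in>UNIV. pd (E k) q (axis a 1) $ a)
      = (\<Sum>a\<in>UNIV. (\<Sum>b\<in>Idx. th b q (pd (E k) q (axis a 1)) *\<^sub>R E b q) $ a)"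
    using expand3[OF q] by (simp add: th_def)
  also have "\<dots> = (\<Sum>b\<in>Idx. \<Sum>a\<in>UNIV. E b q $ a * th b q (pd (E k) q (axis a 1)))"
    by (simp add: sum.swap[of _ UNIV] mult.commute)
  also have "\<dots> = (\<Sum>b\<in>Idx. th b q (pd (E k) q (E b q)))"
    using lin_expand[OF TL, symmetric] by simp
  finally show ?thesis .
qed

lemma divkey: assumes q: "q \<in> U" and k: "k \<in> Idx"
  shows "(\<Sum>a\<in>UNIV. pd (E k) q (axis a 1) $ a) - (\<Sum>b\<in>Idx. th b q (pd (E b) q (E k q))) = (\<Sum>j\<in>Idx. G j j k q)"
proof -
  have TL: "linear (th b q)" for b using bounded_linear.linear[OF th_linear[OF q]] .
  have "(\<Sum>a\<in>UNIV. pd (E k) q (axis a 1) $ a) - (\<Sum>b\<in>Idx. th b q (pd (E b) q (E k q)))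
      = (\<Sum>b\<in>Idx. th b q (bk b k q))"
    unfolding trace[OF q] bk_def by (simp add: linear_diff[OF TL] sum_subtractf)
  also have "\<dots> = (\<Sum>b\<in>Idx. \<Sum>m\<in>Idx. (G m b k q - G m k b q) * dl m b)"
    unfolding bk_expand[OF q] by (intro sum.cong refl) (auto simp: linear_add[OF TL] linear_scale[OF TL] th_E[OF q])
  also have "\<dots> = (\<Sum>b\<in>Idx. G b b k q - G b k b q)"
    by (intro sum.cong refl) (rule sum_dl, simp)
  also have "\<dots> = (\<Sum>j\<in>Idx. G j j k q)" using G_diag[OF q] by (simp add: sum3)
  finally show ?thesis .
qed

end



context hyp begin

lemma DE_cont: "continuous_on U DE"
proof -
  have "isCont DE q" if "q \<in> U" for q
    using has_derivative_continuous[OF DE_deriv[OF that]] .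
  then show ?thesis by (simp add: continuous_at_imp_continuous_on)
qed

lemma DE_hasd: assumes "q \<in> U" shows "(DE has_derivative pd DE q) (at q)"
proof -
  from DE_deriv[OF assms] obtain D where d: "(DE has_derivative D) (at q)" by blast
  then show ?thesis using pd_eq[OF d] by simp
qed

lemma pd_DE_linear: "q \<in> U \<Longrightarrow> linear (pd DE q)"
  using has_derivative_linear[OF DE_hasd] by blast

lemma lap_frame: assumes q: "q \<in> U" and sm: "smooth_on U \<phi>"
  shows "laplacian f \<phi> q = lapF \<phi> q"
proof -
  define W where "W a r = (\<Sum>k\<in>Idx. E k r $ a * dirv (E k) \<phi> r)" for a r
  have hW: "(W a has_derivative (\<lambda>w. \<Sum>k\<in>Idx. pd (E k) q w $ a * dirv (E k) \<phi> q + E k q $ a * pd (dirv (E k) \<phi>) q w)) (at q)" for a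
  proof -
    have "((\<lambda>r. E k r $ a * dirv (E k) \<phi> r) has_derivative (\<lambda>w. pd (E k) q w $ a * dirv (E k) \<phi> q + E k q $ a * pd (dirv (E k) \<phi>) q w)) (at q)" for k
      by (rule has_derivative_eq_rhs[OF has_derivative_mult[OF
        bounded_linear.has_derivative[OF bounded_linear_vec_nth smooth_has_derivative[OF U smE q]]
        smooth_has_derivative[OF U smDir[OF sm] q]]]) (simp add: fun_eq_iff algebra_simps)
    then show ?thesis unfolding W_def[abs_def] by (intro has_derivative_sum) auto
  qed
  have inner_eq: "\<forall>r\<in>U. (\<Sum>j\<in>UNIV. matrix_inv (Gmat f r) $ a $ j * pd \<phi> r (axis j 1)) = W a r" for a
  proof
    fix r assume r: "r \<in> U"
    have "(\<Sum>j\<in>UNIV. matrix_inv (Gmat f r) $ a $ j * pd \<phi> r (axis j 1))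
        = (\<Sum>j\<in>UNIV. (\<Sum>k\<in>Idx. E k r $ a * E k r $ j) * pd \<phi> r (axis j 1))"
      by (simp add: minv[OF r] Pm_def)
    also have "\<dots> = (\<Sum>k\<in>Idx. E k r $ a * (\<Sum>j\<in>UNIV. E k r $ j * pd \<phi> r (axis j 1)))"
      by (simp add: sum_distrib_left sum_distrib_right distrib_left sum.distrib mult_ac)
    also have "\<dots> = W a r" using dir_expand[OF r sm] by (simp add: W_def)
    finally show "(\<Sum>j\<in>UNIV. matrix_inv (Gmat f r) $ a $ j * pd \<phi> r (axis j 1)) = W a r" .
  qed
  define s where "s = sgn (DE q)"
  have DEq: "DE q \<noteq> 0" using DE_ne[OF q] .
  have s1: "s * s = 1" and sabs: "\<bar>DE q\<bar> = s * DE q" using DEq by (auto simp: s_def sgn_if)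
  define V where "V = U \<inter> (\<lambda>r. s * DE r) -` {0<..}"
  have Vo: "open V" unfolding V_def
    by (rule continuous_open_preimage[OF continuous_on_mult[OF continuous_on_const DE_cont] U]) simp
  have qV: "q \<in> V" using q DEq sabs by (simp add: V_def)
  have VU: "V \<subseteq> U" by (auto simp: V_def)
  have onV: "\<forall>r\<in>V. sqrt (det (Gmat f r)) * (\<Sum>j\<in>UNIV. matrix_inv (Gmat f r) $ a $ j * pd \<phi> r (axis j 1))
              = s * inverse (DE r) * W a r" for a
  proof
    fix r assume r: "r \<in> V"
    then have rU: "r \<in> U" and pos: "s * DE r > 0" by (auto simp: V_def)
    have "\<bar>DE r\<bar> = s * DE r" using pos s1 by (auto simp: s_def sgn_if abs_if split: if_splits)
    then have "inverse \<bar>DE r\<bar> = s * inverse (DE r)" using s1 by (auto simp: s_def sgn_if split: if_splits)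
    then show "sqrt (det (Gmat f r)) * (\<Sum>j\<in>UNIV. matrix_inv (Gmat f r) $ a $ j * pd \<phi> r (axis j 1))
              = s * inverse (DE r) * W a r"
      using sqrt_detG[OF rU] inner_eq[of a] rU by simp
  qed
  have hD: "((\<lambda>r. s * inverse (DE r) * W a r) has_derivative
      (\<lambda>w. s * (- (inverse (DE q) * pd DE q w * inverse (DE q))) * W a q + s * inverse (DE q) * (\<Sum>k\<in>Idx. pd (E k) q w $ a * dirv (E k) \<phi> q + E k q $ a * pd (dirv (E k) \<phi>) q w))) (at q)" for a
  proof -
    have "((\<lambda>r. s * inverse (DE r)) has_derivative (\<lambda>w. s * (- (inverse (DE q) * pd DE q w * inverse (DE q))))) (at q)"
      using has_derivative_mult[OF has_derivative_const Deriv.has_derivative_inverse[OF DEq DE_hasd[OF q]]]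
      by simp
    from has_derivative_mult[OF this hW[of a]] show ?thesis by (simp add: algebra_simps)
  qed
  have pdi: "pd (\<lambda>r. sqrt (det (Gmat f r)) * (\<Sum>j\<in>UNIV. matrix_inv (Gmat f r) $ a $ j * pd \<phi> r (axis j 1))) q (axis a 1)
     = - (pd DE q (axis a 1) * W a q) * s * inverse (DE q) * inverse (DE q)
       + s * inverse (DE q) * (\<Sum>k\<in>Idx. pd (E k) q (axis a 1) $ a * dirv (E k) \<phi> q + E k q $ a * pd (dirv (E k) \<phi>) q (axis a 1))" for a
    using pd_cong_open[OF Vo qV onV[of a]] pd_eq[OF hD[of a]] by (simp add: algebra_simps)
  have lap1: "laplacian f \<phi> q = (\<Sum>a\<in>UNIV. - (pd DE q (axis a 1) * W a q) * inverse (DE q)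
       + (\<Sum>k\<in>Idx. pd (E k) q (axis a 1) $ a * dirv (E k) \<phi> q + E k q $ a * pd (dirv (E k) \<phi>) q (axis a 1)))"
  proof -
    have "laplacian f \<phi> q = \<bar>DE q\<bar> * (\<Sum>a\<in>UNIV. - (pd DE q (axis a 1) * W a q) * s * inverse (DE q) * inverse (DE q)
       + s * inverse (DE q) * (\<Sum>k\<in>Idx. pd (E k) q (axis a 1) $ a * dirv (E k) \<phi> q + E k q $ a * pd (dirv (E k) \<phi>) q (axis a 1)))"
      unfolding laplacian_def pdi sqrt_detG[OF q] by (simp add: divide_inverse mult.commute)
    also have "\<dots> = (\<Sum>a\<in>UNIV. \<bar>DE q\<bar> * (- (pd DE q (axis a 1) * W a q) * s * inverse (DE q) * inverse (DE q)
       + s * inverse (DE q) * (\<Sum>k\<in>Idx. pd (E k) q (axis a 1) $ a * dirv (E k) \<phi> q + E k q $ a * pd (dirv (E k) \<phi>) q (axis a 1))))"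
      by (simp add: sum_distrib_left)
    also have "\<dots> = (\<Sum>a\<in>UNIV. - (pd DE q (axis a 1) * W a q) * inverse (DE q)
       + (\<Sum>k\<in>Idx. pd (E k) q (axis a 1) $ a * dirv (E k) \<phi> q + E k q $ a * pd (dirv (E k) \<phi>) q (axis a 1)))"
    proof (rule sum.cong[OF refl])
      have key: "\<bar>DE q\<bar> * s * inverse (DE q) = 1" using sabs s1 DEq by (simp add: algebra_simps)
      have "\<bar>DE q\<bar> * (- x * s * inverse (DE q) * inverse (DE q) + s * inverse (DE q) * y) = - x * inverse (DE q) + y" for x y
      proof -
        have "\<bar>DE q\<bar> * (- x * s * inverse (DE q) * inverse (DE q) + s * inverse (DE q) * y)
            = (\<bar>DE q\<bar> * s * inverse (DE q)) * (- x * inverse (DE q) + y)" by (simp add: algebra_simps)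
        then show ?thesis using key by simp
      qed
      then show "\<bar>DE q\<bar> * (- (pd DE q (axis a 1) * W a q) * s * inverse (DE q) * inverse (DE q)
       + s * inverse (DE q) * (\<Sum>k\<in>Idx. pd (E k) q (axis a 1) $ a * dirv (E k) \<phi> q + E k q $ a * pd (dirv (E k) \<phi>) q (axis a 1)))
       = - (pd DE q (axis a 1) * W a q) * inverse (DE q)
       + (\<Sum>k\<in>Idx. pd (E k) q (axis a 1) $ a * dirv (E k) \<phi> q + E k q $ a * pd (dirv (E k) \<phi>) q (axis a 1))" for a
        by blast
    qed
    finally show ?thesis .
  qed
  have part1: "(\<Sum>a\<in>UNIV. pd DE q (axis a 1) * W a q) = (\<Sum>k\<in>Idx. dirv (E k) \<phi> q * pd DE q (E k q))"
  proof -
    have "(\<Sum>a\<in>UNIV. pd DE q (axis a 1) * W a q) = (\<Sum>k\<in>Idx. dirv (E k) \<phi> q * (\<Sum>a\<in>UNIV. E k q $ a * pd DE q (axis a 1)))"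
      by (simp add: W_def sum_distrib_left sum_distrib_right distrib_left sum.distrib mult_ac)
    also have "\<dots> = (\<Sum>k\<in>Idx. dirv (E k) \<phi> q * pd DE q (E k q))"
      using lin_expand[OF pd_DE_linear[OF q], symmetric] by simp
    finally show ?thesis .
  qed
  have part2: "(\<Sum>a\<in>UNIV. \<Sum>k\<in>Idx. pd (E k) q (axis a 1) $ a * dirv (E k) \<phi> q + E k q $ a * pd (dirv (E k) \<phi>) q (axis a 1))
      = (\<Sum>k\<in>Idx. (\<Sum>a\<in>UNIV. pd (E k) q (axis a 1) $ a) * dirv (E k) \<phi> q + dirv (E k) (dirv (E k) \<phi>) q)"
  proof -
    have "(\<Sum>a\<in>UNIV. E k q $ a * pd (dirv (E k) \<phi>) q (axis a 1)) = dirv (E k) (dirv (E k) \<phi>) q" for k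
      using dir_expand[OF q smDir[OF sm], of k] by simp
    then show ?thesis by (simp add: sum.distrib sum_distrib_right sum.swap[of _ UNIV])
  qed
  define S where "S a = (\<Sum>k\<in>Idx. pd (E k) q (axis a 1) $ a * dirv (E k) \<phi> q + E k q $ a * pd (dirv (E k) \<phi>) q (axis a 1))" for a
  define T where "T k = (\<Sum>b\<in>Idx. th b q (pd (E b) q (E k q)))" for k
  define tr where "tr k = (\<Sum>a\<in>UNIV. pd (E k) q (axis a 1) $ a)" for k
  have "laplacian f \<phi> q = - ((\<Sum>a\<in>UNIV. pd DE q (axis a 1) * W a q) * inverse (DE q)) + (\<Sum>a\<in>UNIV. S a)"
    unfolding lap1 S_def[symmetric] by (simp add: sum.distrib sum_distrib_right sum_negf sum_subtractf)
  also have "(\<Sum>a\<in>UNIV. pd DE q (axis a 1) * W a q) * inverse (DE q) = (\<Sum>k\<in>Idx. dirv (E k) \<phi> q * T k)"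
  proof -
    have "(\<Sum>a\<in>UNIV. pd DE q (axis a 1) * W a q) * inverse (DE q) = (\<Sum>k\<in>Idx. dirv (E k) \<phi> q * pd DE q (E k q)) * inverse (DE q)"
      by (simp only: part1)
    also have "\<dots> = (\<Sum>k\<in>Idx. dirv (E k) \<phi> q * (T k * DE q) * inverse (DE q))"
      by (simp only: pd_DE[OF q] T_def[symmetric] sum_distrib_right)
    also have "\<dots> = (\<Sum>k\<in>Idx. dirv (E k) \<phi> q * T k)" using DEq by (simp add: mult.assoc)
    finally show ?thesis .
  qed
  also have "(\<Sum>a\<in>UNIV. S a) = (\<Sum>k\<in>Idx. tr k * dirv (E k) \<phi> q + dirv (E k) (dirv (E k) \<phi>) q)"
    unfolding S_def tr_def by (rule part2)
  finally have "laplacian f \<phi> q = (\<Sum>k\<in>Idx. dirv (E k) (dirv (E k) \<phi>) q) + (\<Sum>k\<in>Idx. (tr k - T k) * dirv (E k) \<phi> q)"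
    by (simp add: sum.distrib sum_subtractf algebra_simps)
  then have "laplacian f \<phi> q = (\<Sum>k\<in>Idx. dirv (E k) (dirv (E k) \<phi>) q)
      + (\<Sum>k\<in>Idx. ((\<Sum>a\<in>UNIV. pd (E k) q (axis a 1) $ a) - (\<Sum>b\<in>Idx. th b q (pd (E b) q (E k q)))) * dirv (E k) \<phi> q)"
    by (simp add: tr_def T_def)
  also have "\<dots> = lapF \<phi> q"
    unfolding lapF_def using divkey[OF q] by simp
  finally show ?thesis .
qed

end



context hyp begin

lemma LC_eq: assumes q: "q \<in> U" shows "LC_inner f e3 e1 e2 q = uu q"
proof -
  define S where "S a b = pd (\<lambda>r. pd f r a) q b" for a b
  have Ssym: "S a b = S b a" for a b unfolding S_def by (rule schwarz_vec[OF U f_smooth q])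
  have dg: "pd (\<lambda>r. gm f r Y Z) q X = inner (S Y X) (pd f q Z) + inner (pd f q Y) (S Z X)" for X Y Z
    unfolding gm_def S_def by (rule pd_inner[OF U smooth_pd[OF f_smooth] smooth_pd[OF f_smooth] q])
  have gam: "Gam1 f q X Y Z = inner (S X Y) (pd f q Z)" for X Y Z
    unfolding Gam1_def dg using Ssym[of X Z] Ssym[of Y Z] Ssym[of Y X]
    by (simp add: inner_commute)
  have "uu q = inner (pd (\<lambda>r. pd f r (e1 r)) q (e3 q)) (pd f q (e2 q))"
    by (simp add: uu_def G_def dirv_def[abs_def] F_def E_def)
  also have "\<dots> = inner (pd f q (pd e1 q (e3 q)) + S (e3 q) (e1 q)) (pd f q (e2 q))"
    using pd_dir_vec[OF U f_smooth e_smooth(1) q] by (simp add: S_def)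
  also have "\<dots> = LC_inner f e3 e1 e2 q"
    by (simp add: LC_inner_def gam gm_def inner_add_left)
  finally show ?thesis by simp
qed

lemma v_eq: assumes q: "q \<in> U" shows "pd (\<lambda>q. ln (lam q)) q (e2 q) = vv q"
proof -
  have "((\<lambda>r. ln (lam r)) has_derivative (\<lambda>w. pd lam q w * inverse (lam q))) (at q)"
    by (rule has_derivative_ln[OF _ smooth_has_derivative[OF U lam_smooth q]]) (use lam_pos q in auto)
  from pd_eq[OF this] show ?thesis by (simp add: vv_def dirv_def E_def)
qed

lemma smhh: "smooth_on U hh" unfolding hh_def
  by (intro smooth_add[OF U] smooth_mult[OF U] smooth_diff[OF U] smuu smvv smooth_const)

lemma laplacian_cong: assumes q: "q \<in> U" and e: "\<forall>r\<in>U. \<phi> r = \<psi> r"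
  shows "laplacian f \<phi> q = laplacian f \<psi> q"
proof -
  have "\<forall>r\<in>U. pd \<phi> r = pd \<psi> r" using pd_cong_open[OF U _ e] by blast
  then have "pd (\<lambda>r. sqrt (det (Gmat f r)) * (\<Sum>j\<in>UNIV. matrix_inv (Gmat f r) $ i $ j * pd \<phi> r (axis j 1))) q
           = pd (\<lambda>r. sqrt (det (Gmat f r)) * (\<Sum>j\<in>UNIV. matrix_inv (Gmat f r) $ i $ j * pd \<psi> r (axis j 1))) q" for i
    by (intro pd_cong_open[OF U q]) simp
  then show ?thesis by (simp add: laplacian_def)
qed

lemma grad_cong: assumes q: "q \<in> U" and e: "\<forall>r\<in>U. \<phi> r = \<psi> r"
  shows "grad_sq f \<phi> q = grad_sq f \<psi> q"
  using pd_cong_open[OF U q e] by (simp add: grad_sq_def)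

lemma final:
  shows "\<forall>p\<in>U.
      laplacian f (\<lambda>p. (LC_inner f e3 e1 e2 p - 1)\<^sup>2 + (pd (\<lambda>q. ln (lam q)) p (e2 p))\<^sup>2) p / 2
        = grad_sq f (LC_inner f e3 e1 e2) p + grad_sq f (\<lambda>p. pd (\<lambda>q. ln (lam q)) p (e2 p)) p \<and>
      grad_sq f (LC_inner f e3 e1 e2) p + grad_sq f (\<lambda>p. pd (\<lambda>q. ln (lam q)) p (e2 p)) p
        \<ge> ((\<lambda>p. (LC_inner f e3 e1 e2 p - 1)\<^sup>2 + (pd (\<lambda>q. ln (lam q)) p (e2 p))\<^sup>2) p)\<^sup>2
          + 4 * LC_inner f e3 e1 e2 p * (\<lambda>p. (LC_inner f e3 e1 e2 p - 1)\<^sup>2 + (pd (\<lambda>q. ln (lam q)) p (e2 p))\<^sup>2) p \<and>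
      (LC_inner f e3 e1 e2 p > 0 \<longrightarrow>
        laplacian f (\<lambda>p. (LC_inner f e3 e1 e2 p - 1)\<^sup>2 + (pd (\<lambda>q. ln (lam q)) p (e2 p))\<^sup>2) p
         \<ge> 2 * ((\<lambda>p. (LC_inner f e3 e1 e2 p - 1)\<^sup>2 + (pd (\<lambda>q. ln (lam q)) p (e2 p))\<^sup>2) p)\<^sup>2)"
proof
  fix p assume p: "p \<in> U"
  have eh: "\<forall>r\<in>U. (LC_inner f e3 e1 e2 r - 1)\<^sup>2 + (pd (\<lambda>q. ln (lam q)) r (e2 r))\<^sup>2 = hh r"
    using LC_eq v_eq by (simp add: hh_def power2_eq_square)
  have eu: "\<forall>r\<in>U. LC_inner f e3 e1 e2 r = uu r" using LC_eq by blast
  have ev: "\<forall>r\<in>U. pd (\<lambda>q. ln (lam q)) r (e2 r) = vv r" using v_eq by blast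
  have L: "laplacian f (\<lambda>p. (LC_inner f e3 e1 e2 p - 1)\<^sup>2 + (pd (\<lambda>q. ln (lam q)) p (e2 p))\<^sup>2) p
      = 2 * (\<Sum>k\<in>Idx. (dirv (E k) uu p)\<^sup>2 + (dirv (E k) vv p)\<^sup>2)"
    using laplacian_cong[OF p eh] lap_frame[OF p smhh] lap_hh[OF p] by simp
  have Gu: "grad_sq f (LC_inner f e3 e1 e2) p = (\<Sum>k\<in>Idx. (dirv (E k) uu p)\<^sup>2)"
    using grad_cong[OF p eu] grad_frame[OF p smuu] by simp
  have Gv: "grad_sq f (\<lambda>p. pd (\<lambda>q. ln (lam q)) p (e2 p)) p = (\<Sum>k\<in>Idx. (dirv (E k) vv p)\<^sup>2)"
    using grad_cong[OF p ev] grad_frame[OF p smvv] by simp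
  define U0 where "U0 = uu p"
  define V0 where "V0 = vv p"
  define H where "H = (U0 - 1)\<^sup>2 + V0\<^sup>2"
  have Hp: "(LC_inner f e3 e1 e2 p - 1)\<^sup>2 + (pd (\<lambda>q. ln (lam q)) p (e2 p))\<^sup>2 = H"
    using LC_eq[OF p] v_eq[OF p] by (simp add: H_def U0_def V0_def)
  have up: "LC_inner f e3 e1 e2 p = U0" using LC_eq[OF p] by (simp add: U0_def)
  have gsum: "grad_sq f (LC_inner f e3 e1 e2) p + grad_sq f (\<lambda>p. pd (\<lambda>q. ln (lam q)) p (e2 p)) p
     = (\<Sum>k\<in>Idx. (dirv (E k) uu p)\<^sup>2 + (dirv (E k) vv p)\<^sup>2)"
    unfolding Gu Gv by (simp add: sum.distrib)
  have ineq: "(\<Sum>k\<in>Idx. (dirv (E k) uu p)\<^sup>2 + (dirv (E k) vv p)\<^sup>2) \<ge> H\<^sup>2 + 4 * U0 * H"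
  proof -
    have "(\<Sum>k\<in>Idx. (dirv (E k) uu p)\<^sup>2 + (dirv (E k) vv p)\<^sup>2) \<ge> (dirv (E 2) uu p)\<^sup>2 + (dirv (E 2) vv p)\<^sup>2"
      by (simp add: sum3)
    moreover have "(dirv (E 2) uu p)\<^sup>2 + (dirv (E 2) vv p)\<^sup>2 = H\<^sup>2 + 4 * U0 * H"
      unfolding gauss_inst(1)[OF p] gauss_inst(2)[OF p] H_def U0_def V0_def by (simp add: power2_eq_square algebra_simps)
    ultimately show ?thesis by simp
  qed
  have H0: "H \<ge> 0" by (simp add: H_def)
  show "laplacian f (\<lambda>p. (LC_inner f e3 e1 e2 p - 1)\<^sup>2 + (pd (\<lambda>q. ln (lam q)) p (e2 p))\<^sup>2) p / 2
        = grad_sq f (LC_inner f e3 e1 e2) p + grad_sq f (\<lambda>p. pd (\<lambda>q. ln (lam q)) p (e2 p)) p \<and>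
      grad_sq f (LC_inner f e3 e1 e2) p + grad_sq f (\<lambda>p. pd (\<lambda>q. ln (lam q)) p (e2 p)) p
        \<ge> ((\<lambda>p. (LC_inner f e3 e1 e2 p - 1)\<^sup>2 + (pd (\<lambda>q. ln (lam q)) p (e2 p))\<^sup>2) p)\<^sup>2
          + 4 * LC_inner f e3 e1 e2 p * (\<lambda>p. (LC_inner f e3 e1 e2 p - 1)\<^sup>2 + (pd (\<lambda>q. ln (lam q)) p (e2 p))\<^sup>2) p \<and>
      (LC_inner f e3 e1 e2 p > 0 \<longrightarrow>
        laplacian f (\<lambda>p. (LC_inner f e3 e1 e2 p - 1)\<^sup>2 + (pd (\<lambda>q. ln (lam q)) p (e2 p))\<^sup>2) p
         \<ge> 2 * ((\<lambda>p. (LC_inner f e3 e1 e2 p - 1)\<^sup>2 + (pd (\<lambda>q. ln (lam q)) p (e2 p))\<^sup>2) p)\<^sup>2)"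
  proof (intro conjI impI)
    show "laplacian f (\<lambda>p. (LC_inner f e3 e1 e2 p - 1)\<^sup>2 + (pd (\<lambda>q. ln (lam q)) p (e2 p))\<^sup>2) p / 2
        = grad_sq f (LC_inner f e3 e1 e2) p + grad_sq f (\<lambda>p. pd (\<lambda>q. ln (lam q)) p (e2 p)) p"
      unfolding L gsum by simp
    show "grad_sq f (LC_inner f e3 e1 e2) p + grad_sq f (\<lambda>p. pd (\<lambda>q. ln (lam q)) p (e2 p)) p
        \<ge> ((\<lambda>p. (LC_inner f e3 e1 e2 p - 1)\<^sup>2 + (pd (\<lambda>q. ln (lam q)) p (e2 p))\<^sup>2) p)\<^sup>2
          + 4 * LC_inner f e3 e1 e2 p * (\<lambda>p. (LC_inner f e3 e1 e2 p - 1)\<^sup>2 + (pd (\<lambda>q. ln (lam q)) p (e2 p))\<^sup>2) p"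
      unfolding gsum Hp unfolding up using ineq by simp
    assume "LC_inner f e3 e1 e2 p > 0"
    then have "U0 * H \<ge> 0" using H0 up by simp
    then show "laplacian f (\<lambda>p. (LC_inner f e3 e1 e2 p - 1)\<^sup>2 + (pd (\<lambda>q. ln (lam q)) p (e2 p))\<^sup>2) p
         \<ge> 2 * ((\<lambda>p. (LC_inner f e3 e1 e2 p - 1)\<^sup>2 + (pd (\<lambda>q. ln (lam q)) p (e2 p))\<^sup>2) p)\<^sup>2"
      unfolding L Hp using ineq by simp
  qed
qed

end

theorem mainTheorem6:
  fixes U :: "(real^3) set" and f :: "real^3 \<Rightarrow> real^5" and N :: "real^3 \<Rightarrow> real^5"
    and lam :: "real^3 \<Rightarrow> real" and e1 e2 e3 :: "real^3 \<Rightarrow> real^3"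
  assumes U_open: "open U"
    and f_smooth: "smooth_on U f"
    and f_sphere: "\<forall>p\<in>U. norm (f p) = 1"
    and f_immersion: "\<forall>p\<in>U. inj (pd f p)"
    and N_smooth: "smooth_on U N"
    and N_unit: "\<forall>p\<in>U. norm (N p) = 1"
    and N_normal: "\<forall>p\<in>U. inner (N p) (f p) = 0 \<and> (\<forall>w. inner (N p) (pd f p w) = 0)"
    and lam_smooth: "smooth_on U lam"
    and lam_pos: "\<forall>p\<in>U. lam p > 0"
    and e_smooth: "smooth_on U e1" "smooth_on U e2" "smooth_on U e3"
    and e_orthonormal: "\<forall>p\<in>U.
        gm f p (e1 p) (e1 p) = 1 \<and> gm f p (e2 p) (e2 p) = 1 \<and> gm f p (e3 p) (e3 p) = 1 \<and>
        gm f p (e1 p) (e2 p) = 0 \<and> gm f p (e1 p) (e3 p) = 0 \<and> gm f p (e2 p) (e3 p) = 0"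
    and e_principal: "\<forall>p\<in>U.
        pd N p (e1 p) = - (lam p *\<^sub>R pd f p (e1 p)) \<and>
        pd N p (e2 p) = 0 \<and>
        pd N p (e3 p) = lam p *\<^sub>R pd f p (e3 p)"
  defines "u \<equiv> LC_inner f e3 e1 e2"
    and "v \<equiv> (\<lambda>p. pd (\<lambda>q. ln (lam q)) p (e2 p))"
    and "h \<equiv> (\<lambda>p. (LC_inner f e3 e1 e2 p - 1)\<^sup>2 + (pd (\<lambda>q. ln (lam q)) p (e2 p))\<^sup>2)"
  shows "\<forall>p\<in>U.
      laplacian f h p / 2 = grad_sq f u p + grad_sq f v p \<and>
      grad_sq f u p + grad_sq f v p \<ge> (h p)\<^sup>2 + 4 * u p * h p \<and>
      (u p > 0 \<longrightarrow> laplacian f h p \<ge> 2 * (h p)\<^sup>2)"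
proof -
  have H: "hyp U f N lam e1 e2 e3"
    unfolding hyp_def using U_open f_smooth f_sphere f_immersion N_smooth N_unit N_normal lam_smooth lam_pos
      e_smooth e_orthonormal e_principal by blast
  show ?thesis unfolding u_def v_def h_def using hyp.final[OF H] by blast
qed

end
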